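(* Let $\phi$ be a real function on finite strings over $\{1,\dots,k_0\}$ that is increasing, i.e. $\phi(u)\le\phi(w)$ whenever $u$ is a contiguous substring of $w$. For the stationary mean $\mu$ of the RHA process and all $n\ge1$, $j\ge1$, $$\mathbb E_P\,\phi(X^{n-1}_j)\le\mathbb E_\mu\,\phi(\xi_{1:2^n})\le\mathbb E_P\,\phi(X^{n+1}_j).$$
   Context: Random hierarchical association (RHA) process. Fix positive integers $(k_n)_{n\ge0}$ (perplexities) with $k_{n-1}\le k_n\le k_{n-1}^2$ for all $n\ge1$. On a probability space $(\Omega,\mathcal J,P)$ let, for each $n\ge1$, $(L_{nj},R_{nj})_{j=1}^{k_n}$ be the lexicographically sorted enumeration of a uniformly random $k_n$-element subset of $\{1,\dots,k_{n-1}\}^2$ (each of the $\binom{k_{n-1}^2}{k_n}$ subsets equally likely), independently over $n$. Let $(C_n)_{n\ge0}$ be independent, independent of all $(L_{nj},R_{nj})$, with $C_n$ uniform on $\{1,\dots,k_n\}$. Define strings $Y^0_j=j$ (length 1) for $1\le j\le k_0$ and $Y^n_j=Y^{n-1}_{L_{nj}}Y^{n-1}_{R_{nj}}$ (concatenation). The RHA process is $\mathcal X=Y^0_{C_0}Y^1_{C_1}Y^2_{C_2}\cdots=X_1X_2X_3\cdots$, $X_{k:l}=X_k\cdots X_l$; for $n\ge0$, $j\ge1$, $X^n_j=X_{j2^n:(j+1)2^n-1}$. The limits $\mu(x_{1:m})=\lim_{N\to\infty}\frac1N\sum_{i=1}^NP(X_{i:i+m-1}=x_{1:m})$ exist and define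 a stationary probability measure $\mu$ on $\{1,\dots,k_0\}^{\mathbb N}$ (the stationary mean), with coordinate maps $\xi_i$. *)

theory Defs
  imports "HOL-Probability.Probability" "HOL-Library.Sublist"
begin

text \<open>Sample points: \<open>\<omega> n = (S_n, C_n)\<close>, where \<open>S_n\<close> is the random \<open>k_n\<close>-element
subset of \<open>{1..k_(n-1)}^2\<close> (unused, set to empty, for \<open>n = 0\<close>) and \<open>C_n\<close> is uniform
on \<open>{1..k_n}\<close>.\<close>

definition rha_level_pmf :: "(nat \<Rightarrow> nat) \<Rightarrow> nat \<Rightarrow> ((nat \<times> nat) set \<times> nat) pmf" where
  "rha_level_pmf k n =
     (if n = 0 then map_pmf (\<lambda>c. ({}, c)) (pmf_of_set {1..k 0})
      else pair_pmf
             (pmf_of_set {S. S \<subseteq> {1..k (n-1)} \<times> {1..k (n-1)} \<and> card S = k n})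
             (pmf_of_set {1..k n}))"

definition RHA_P :: "(nat \<Rightarrow> nat) \<Rightarrow> (nat \<Rightarrow> (nat \<times> nat) set \<times> nat) measure" where
  "RHA_P k = PiM UNIV (\<lambda>n. measure_pmf (rha_level_pmf k n))"

definition rha_enum :: "nat \<Rightarrow> (nat \<times> nat) set \<Rightarrow> (nat \<times> nat) list" where
  "rha_enum K S = [(a, b). a \<leftarrow> [1..<K+1], b \<leftarrow> [1..<K+1], (a, b) \<in> S]"

text \<open>\<open>Y^n_j\<close> (indices \<open>j\<close> start at 1; \<open>(L_{nj}, R_{nj}) = rha_enum ... ! (j-1)\<close>).\<close>
fun rha_Y :: "(nat \<Rightarrow> nat) \<Rightarrow> (nat \<Rightarrow> (nat \<times> nat) set \<times> nat) \<Rightarrow> nat \<Rightarrow> nat \<Rightarrow> nat list" where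
  "rha_Y k \<omega> 0 j = [j]"
| "rha_Y k \<omega> (Suc n) j =
     (let p = rha_enum (k n) (fst (\<omega> (Suc n))) ! (j - 1)
      in rha_Y k \<omega> n (fst p) @ rha_Y k \<omega> n (snd p))"

text \<open>\<open>X_{a:b} = X_a \<dots> X_b\<close> (1-indexed) of \<open>Y^0_{C_0} Y^1_{C_1} \<dots>\<close>; the first \<open>b\<close>
blocks already have total length \<open>\<ge> b\<close>.\<close>
definition rha_Xseg :: "(nat \<Rightarrow> nat) \<Rightarrow> (nat \<Rightarrow> (nat \<times> nat) set \<times> nat) \<Rightarrow> nat \<Rightarrow> nat \<Rightarrow> nat list" where
  "rha_Xseg k \<omega> a b = drop (a - 1) (take b (concat (map (\<lambda>n. rha_Y k \<omega> n (snd (\<omega> n))) [0..<b])))"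

definition rha_Xblock :: "(nat \<Rightarrow> nat) \<Rightarrow> (nat \<Rightarrow> (nat \<times> nat) set \<times> nat) \<Rightarrow> nat \<Rightarrow> nat \<Rightarrow> nat list" where
  "rha_Xblock k \<omega> n j = rha_Xseg k \<omega> (j * 2 ^ n) ((j + 1) * 2 ^ n - 1)"

definition rha_mu :: "(nat \<Rightarrow> nat) \<Rightarrow> nat list \<Rightarrow> real" where
  "rha_mu k x = lim (\<lambda>N. (\<Sum>i = 1..N. measure (RHA_P k)
       {\<omega> \<in> space (RHA_P k). rha_Xseg k \<omega> i (i + length x - 1) = x}) / real N)"

definition rha_mu_expect :: "(nat \<Rightarrow> nat) \<Rightarrow> nat \<Rightarrow> (nat list \<Rightarrow> real) \<Rightarrow> real" where
  "rha_mu_expect k m f = (\<Sum>x \<in> {x. length x = m \<and> set x \<subseteq> {1..k 0}}. rha_mu k x * f x)"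

end

theory Submission
  imports Defs
begin

lemma lc_filter: "[(a, b). a \<leftarrow> xs, b \<leftarrow> ys, (a, b) \<in> S] = filter (\<lambda>x. x \<in> S) (List.product xs ys)"
proof (induction xs)
  case Nil then show ?case by simp
next
  case (Cons x xs)
  have "[(x, b). b \<leftarrow> ys, (x, b) \<in> S] = filter (\<lambda>z. z \<in> S) (map (Pair x) ys)"
    by (induction ys) auto
  then show ?case using Cons by simp
qed
lemma rha_enum_filter: "rha_enum K S = filter (\<lambda>x. x \<in> S) (List.product [1..<K+1] [1..<K+1])"
  unfolding rha_enum_def by (rule lc_filter)
lemma rha_enum_props:
  assumes "S \<subseteq> {1..K} \<times> {1..K}"
  shows "distinct (rha_enum K S)" "set (rha_enum K S) = S" "length (rha_enum K S) = card S"
proof -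
  show d: "distinct (rha_enum K S)" unfolding rha_enum_filter by (intro distinct_filter distinct_product distinct_upt)
  show s: "set (rha_enum K S) = S" unfolding rha_enum_filter using assms by auto
  show "length (rha_enum K S) = card S" using distinct_card[OF d] s by simp
qed


lemma sum_enum:
  assumes "S \<subseteq> {1..K} \<times> {1..K}" "card S = kk"
  shows "(\<Sum>c=1..kk. H (rha_enum K S ! (c-1))) = (\<Sum>x\<in>S. H x)"
proof -
  note P = rha_enum_props[OF assms(1)]
  have "(\<Sum>c=1..kk. H (rha_enum K S ! (c-1))) = (\<Sum>i<kk. H (rha_enum K S ! i))"
    by (rule sum.reindex_bij_witness[of _ "\<lambda>i. i+1" "\<lambda>c. c-1"]) auto
  also have "\<dots> = sum_list (map H (rha_enum K S))"
    using P assms by (simp add: sum_list_sum_nth atLeast0LessThan)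
  also have "\<dots> = (\<Sum>x\<in>S. H x)"
    using P by (simp add: sum_list_distinct_conv_sum_set)
  finally show ?thesis .
qed

lemma card_subsets_containing:
  assumes "finite U" "x \<in> U" "1 \<le> kk"
  shows "card {S. S \<subseteq> U \<and> card S = kk \<and> x \<in> S} = (card U - 1) choose (kk - 1)"
proof -
  have "bij_betw (insert x) {T. T \<subseteq> U - {x} \<and> card T = kk - 1} {S. S \<subseteq> U \<and> card S = kk \<and> x \<in> S}"
  proof (rule bij_betw_byWitness[where f'="\<lambda>S. S - {x}"])
    show "\<forall>a\<in>{T. T \<subseteq> U - {x} \<and> card T = kk - 1}. insert x a - {x} = a" by auto
    show "\<forall>a'\<in>{S. S \<subseteq> U \<and> card S = kk \<and> x \<in> S}. insert x (a' - {x}) = a'" by auto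
    show "insert x ` {T. T \<subseteq> U - {x} \<and> card T = kk - 1} \<subseteq> {S. S \<subseteq> U \<and> card S = kk \<and> x \<in> S}"
    proof safe
      fix T assume "T \<subseteq> U - {x}" "card T = kk - 1"
      moreover have "finite T" using \<open>T \<subseteq> U - {x}\<close> assms(1) finite_subset by blast
      moreover have "x \<notin> T" using \<open>T \<subseteq> U - {x}\<close> by blast
      ultimately show "card (insert x T) = kk" using assms by (simp add: card_insert_disjoint)
    qed (use assms in auto)
    show "(\<lambda>S. S - {x}) ` {S. S \<subseteq> U \<and> card S = kk \<and> x \<in> S} \<subseteq> {T. T \<subseteq> U - {x} \<and> card T = kk - 1}"
    proof safe
      fix S assume "S \<subseteq> U" "x \<in> S"
      moreover have "finite S" using \<open>S \<subseteq> U\<close> assms(1) finite_subset by blast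
      ultimately show "card (S - {x}) = card S - 1" by auto
    qed auto
  qed
  then have "card {S. S \<subseteq> U \<and> card S = kk \<and> x \<in> S} = card {T. T \<subseteq> U - {x} \<and> card T = kk - 1}"
    by (simp add: bij_betw_same_card)
  also have "\<dots> = card (U - {x}) choose (kk - 1)" using assms by (intro n_subsets) auto
  finally show ?thesis using assms by simp
qed

lemma card_subsets_containing2:
  assumes "finite U" "x \<in> U" "y \<in> U" "x \<noteq> y" "2 \<le> kk"
  shows "card {S. S \<subseteq> U \<and> card S = kk \<and> x \<in> S \<and> y \<in> S} = (card U - 2) choose (kk - 2)"
proof -
  have "bij_betw (\<lambda>T. insert x (insert y T)) {T. T \<subseteq> U - {x,y} \<and> card T = kk - 2}
          {S. S \<subseteq> U \<and> card S = kk \<and> x \<in> S \<and> y \<in> S}"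
  proof (rule bij_betw_byWitness[where f'="\<lambda>S. S - {x,y}"])
    show "\<forall>a\<in>{T. T \<subseteq> U - {x,y} \<and> card T = kk - 2}. insert x (insert y a) - {x,y} = a" by auto
    show "\<forall>a'\<in>{S. S \<subseteq> U \<and> card S = kk \<and> x \<in> S \<and> y \<in> S}. insert x (insert y (a' - {x,y})) = a'" by auto
    show "(\<lambda>T. insert x (insert y T)) ` {T. T \<subseteq> U - {x,y} \<and> card T = kk - 2} \<subseteq> {S. S \<subseteq> U \<and> card S = kk \<and> x \<in> S \<and> y \<in> S}"
    proof safe
      fix T assume "T \<subseteq> U - {x,y}" "card T = kk - 2"
      moreover have "finite T" using \<open>T \<subseteq> U - {x,y}\<close> assms(1) finite_subset by blast
      moreover have "x \<notin> T" "y \<notin> T" using \<open>T \<subseteq> U - {x,y}\<close> by blast+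
      ultimately show "card (insert x (insert y T)) = kk" using assms by (simp add: card_insert_disjoint)
    qed (use assms in auto)
    show "(\<lambda>S. S - {x,y}) ` {S. S \<subseteq> U \<and> card S = kk \<and> x \<in> S \<and> y \<in> S} \<subseteq> {T. T \<subseteq> U - {x,y} \<and> card T = kk - 2}"
    proof safe
      fix S assume "S \<subseteq> U" "x \<in> S" "y \<in> S"
      moreover have "finite S" using \<open>S \<subseteq> U\<close> assms(1) finite_subset by blast
      ultimately show "card (S - {x,y}) = card S - 2" using assms by (auto simp: card_Diff_subset)
    qed auto
  qed
  then have "card {S. S \<subseteq> U \<and> card S = kk \<and> x \<in> S \<and> y \<in> S} = card {T. T \<subseteq> U - {x,y} \<and> card T = kk - 2}"
    by (simp add: bij_betw_same_card)
  also have "\<dots> = card (U - {x,y}) choose (kk - 2)" using assms by (intro n_subsets) auto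
  finally show ?thesis using assms by (simp add: card_Diff_subset numeral_2_eq_2)
qed



definition Ssets :: "nat \<Rightarrow> nat \<Rightarrow> (nat \<times> nat) set set" where
  "Ssets K kk = {S. S \<subseteq> {1..K} \<times> {1..K} \<and> card S = kk}"

lemma finite_Ssets: "finite (Ssets K kk)"
  unfolding Ssets_def by (rule finite_subset[of _ "Pow ({1..K} \<times> {1..K})"]) auto

lemma card_Ssets: "card (Ssets K kk) = (K*K) choose kk"
  unfolding Ssets_def by (subst n_subsets) auto

lemma sum_over_subset:
  fixes f :: "'a \<Rightarrow> real"
  assumes "finite U" "S \<subseteq> U"
  shows "(\<Sum>x\<in>S. f x) = (\<Sum>x\<in>U. if x \<in> S then f x else 0)"
proof -
  have "S = U \<inter> S" using assms by auto
  then show ?thesis using sum.inter_restrict[OF assms(1), of f S] by simp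
qed

lemma sum_if_const:
  fixes c :: real
  assumes "finite A"
  shows "(\<Sum>S\<in>A. if P S then c else 0) = real (card {S\<in>A. P S}) * c"
  by (subst sum.inter_filter[symmetric]) (simp_all add: assms)

lemma comb_sum1:
  fixes f :: "nat \<times> nat \<Rightarrow> real"
  assumes "1 \<le> kk"
  shows "(\<Sum>S\<in>Ssets K kk. \<Sum>x\<in>S. f x) = real ((K*K - 1) choose (kk - 1)) * (\<Sum>x\<in>{1..K}\<times>{1..K}. f x)"
proof -
  let ?U = "{1..K}\<times>{1..K}"
  have "(\<Sum>S\<in>Ssets K kk. \<Sum>x\<in>S. f x) = (\<Sum>S\<in>Ssets K kk. \<Sum>x\<in>?U. if x \<in> S then f x else 0)"
    by (intro sum.cong refl sum_over_subset) (auto simp: Ssets_def)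
  also have "\<dots> = (\<Sum>x\<in>?U. \<Sum>S\<in>Ssets K kk. if x \<in> S then f x else 0)"
    by (rule sum.swap)
  also have "\<dots> = (\<Sum>x\<in>?U. real ((K*K - 1) choose (kk - 1)) * f x)"
  proof (rule sum.cong[OF refl])
    fix x assume x: "x \<in> ?U"
    have "(\<Sum>S\<in>Ssets K kk. if x \<in> S then f x else 0) = real (card {S\<in>Ssets K kk. x \<in> S}) * f x"
      by (rule sum_if_const[OF finite_Ssets])
    moreover have "{S\<in>Ssets K kk. x \<in> S} = {S. S \<subseteq> ?U \<and> card S = kk \<and> x \<in> S}"
      by (auto simp: Ssets_def)
    moreover have "card {S. S \<subseteq> ?U \<and> card S = kk \<and> x \<in> S} = (K*K - 1) choose (kk - 1)"
      using x assms by (subst card_subsets_containing) auto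
    ultimately show "(\<Sum>S\<in>Ssets K kk. if x \<in> S then f x else 0) = real ((K*K - 1) choose (kk - 1)) * f x"
      by simp
  qed
  finally show ?thesis by (simp add: sum_distrib_left)
qed

lemma comb_sum2:
  fixes g :: "nat \<times> nat \<Rightarrow> nat \<times> nat \<Rightarrow> real" and K kk :: nat
  assumes "1 \<le> kk"
  defines "c1 \<equiv> real ((K*K - 1) choose (kk - 1))"
  defines "c2 \<equiv> (if 2 \<le> kk then real ((K*K - 2) choose (kk - 2)) else 0)"
  shows "(\<Sum>S\<in>Ssets K kk. \<Sum>x\<in>S. \<Sum>y\<in>S. g x y) =
     c2 * (\<Sum>x\<in>{1..K}\<times>{1..K}. \<Sum>y\<in>{1..K}\<times>{1..K}. g x y) + (c1 - c2) * (\<Sum>x\<in>{1..K}\<times>{1..K}. g x x)"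
proof -
  let ?U = "{1..K}\<times>{1..K}"
  have "(\<Sum>S\<in>Ssets K kk. \<Sum>x\<in>S. \<Sum>y\<in>S. g x y) =
        (\<Sum>S\<in>Ssets K kk. \<Sum>x\<in>?U. \<Sum>y\<in>?U. if x \<in> S \<and> y \<in> S then g x y else 0)"
  proof (rule sum.cong[OF refl])
    fix S assume "S \<in> Ssets K kk"
    then have S: "S \<subseteq> ?U" by (auto simp: Ssets_def)
    have "(\<Sum>x\<in>S. \<Sum>y\<in>S. g x y) = (\<Sum>x\<in>?U. if x \<in> S then (\<Sum>y\<in>S. g x y) else 0)"
      using S by (intro sum_over_subset) auto
    also have "\<dots> = (\<Sum>x\<in>?U. if x \<in> S then (\<Sum>y\<in>?U. if y \<in> S then g x y else 0) else 0)"
      using S by (intro sum.cong refl if_cong sum_over_subset) auto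
    also have "\<dots> = (\<Sum>x\<in>?U. \<Sum>y\<in>?U. if x \<in> S \<and> y \<in> S then g x y else 0)"
      by (intro sum.cong refl) auto
    finally show "(\<Sum>x\<in>S. \<Sum>y\<in>S. g x y) = (\<Sum>x\<in>?U. \<Sum>y\<in>?U. if x \<in> S \<and> y \<in> S then g x y else 0)" .
  qed
  also have "\<dots> = (\<Sum>x\<in>?U. \<Sum>S\<in>Ssets K kk. \<Sum>y\<in>?U. if x \<in> S \<and> y \<in> S then g x y else 0)"
    by (rule sum.swap)
  also have "\<dots> = (\<Sum>x\<in>?U. \<Sum>y\<in>?U. \<Sum>S\<in>Ssets K kk. if x \<in> S \<and> y \<in> S then g x y else 0)"
    by (intro sum.cong refl sum.swap)
  also have "\<dots> = (\<Sum>x\<in>?U. \<Sum>y\<in>?U. c2 * g x y + (if x = y then (c1 - c2) * g x y else 0))"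
  proof (rule sum.cong[OF refl], rule sum.cong[OF refl])
    fix x y assume x: "x \<in> ?U" and y: "y \<in> ?U"
    have "(\<Sum>S\<in>Ssets K kk. if x \<in> S \<and> y \<in> S then g x y else 0) = (\<Sum>S\<in>{S\<in>Ssets K kk. x \<in> S \<and> y \<in> S}. g x y)"
      by (subst sum.inter_filter[symmetric]) (simp_all add: finite_Ssets)
    also have "\<dots> = real (card {S. S \<subseteq> ?U \<and> card S = kk \<and> x \<in> S \<and> y \<in> S}) * g x y"
      by (simp add: Ssets_def conj_assoc)
    also have "\<dots> = c2 * g x y + (if x = y then (c1 - c2) * g x y else 0)"
    proof (cases "x = y")
      case True
      then have "card {S. S \<subseteq> ?U \<and> card S = kk \<and> x \<in> S \<and> y \<in> S} = (K*K - 1) choose (kk - 1)"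
        using x assms(1) card_subsets_containing[of ?U x kk] by simp
      then show ?thesis using True by (simp add: c1_def algebra_simps)
    next
      case False
      show ?thesis
      proof (cases "2 \<le> kk")
        case True
        then have "card {S. S \<subseteq> ?U \<and> card S = kk \<and> x \<in> S \<and> y \<in> S} = (K*K - 2) choose (kk - 2)"
          using x y False card_subsets_containing2[of ?U x y kk] by simp
        then show ?thesis using False True by (simp add: c2_def)
      next
        case F2: False
        then have "kk = 1" using assms(1) by simp
        then have "{S. S \<subseteq> ?U \<and> card S = kk \<and> x \<in> S \<and> y \<in> S} = {}"
          using False by (auto simp: card_1_singleton_iff)
        then show ?thesis using False F2 by (simp add: c2_def)
      qed
    qed
    finally show "(\<Sum>S\<in>Ssets K kk. if x \<in> S \<and> y \<in> S then g x y else 0) = c2 * g x y + (if x = y then (c1 - c2) * g x y else 0)" .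
  qed
  also have "\<dots> = c2 * (\<Sum>x\<in>?U. \<Sum>y\<in>?U. g x y) + (c1 - c2) * (\<Sum>x\<in>?U. g x x)"
    by (simp add: sum.distrib sum_distrib_left sum.delta)
  finally show ?thesis .
qed



lemma Ssets_ne: "kk \<le> K*K \<Longrightarrow> Ssets K kk \<noteq> {}"
  using card_Ssets[of K kk] by (metis card.empty zero_less_binomial_iff not_less0 bot_nat_0.not_eq_extremum)

lemma sum_prod_split: "(\<Sum>x\<in>A\<times>B. f (fst x) (snd x)) = (\<Sum>a\<in>A. \<Sum>b\<in>B. f a b)"
  by (simp add: sum.cartesian_product case_prod_beta)

lemma sum_fst_U: "(\<Sum>x\<in>{1..K}\<times>{1..K}. (h::nat\<Rightarrow>real) (fst x)) = real K * (\<Sum>a=1..K. h a)"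
  by (simp add: sum_prod_split[where f="\<lambda>a b. h a"] sum_distrib_left mult.commute)

lemma sum_snd_U: "(\<Sum>x\<in>{1..K}\<times>{1..K}. (h::nat\<Rightarrow>real) (snd x)) = real K * (\<Sum>a=1..K. h a)"
  by (simp add: sum_prod_split[where f="\<lambda>a b. h b"])

lemma choose_id1: "1 \<le> kk \<Longrightarrow> 1 \<le> N \<Longrightarrow> N * ((N - 1) choose (kk - 1)) = (N choose kk) * kk"
  using Suc_times_binomial_eq[of "N - 1" "kk - 1"] by simp

lemma choose_id2: "2 \<le> kk \<Longrightarrow> 2 \<le> N \<Longrightarrow> (N - 1) * ((N - 2) choose (kk - 2)) = ((N - 1) choose (kk - 1)) * (kk - 1)"
  using Suc_times_binomial_eq[of "N - 2" "kk - 2"]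
  by (simp add: Suc_diff_Suc numeral_2_eq_2)

lemma comb1_exp:
  fixes G :: "nat \<Rightarrow> nat \<Rightarrow> real"
  assumes "1 \<le> K" "1 \<le> kk" "kk \<le> K*K"
  shows "measure_pmf.expectation (pmf_of_set (Ssets K kk))
     (\<lambda>S. (\<Sum>c=1..kk. G (fst (rha_enum K S ! (c-1))) (snd (rha_enum K S ! (c-1)))) / real kk)
   = (\<Sum>a=1..K. \<Sum>b=1..K. G a b) / (real K * real K)"
proof -
  let ?T = "\<Sum>a=1..K. \<Sum>b=1..K. G a b"
  let ?c1 = "real ((K*K - 1) choose (kk - 1))"
  let ?B = "real ((K*K) choose kk)"
  have "measure_pmf.expectation (pmf_of_set (Ssets K kk))
     (\<lambda>S. (\<Sum>c=1..kk. G (fst (rha_enum K S ! (c-1))) (snd (rha_enum K S ! (c-1)))) / real kk)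
     = (\<Sum>S\<in>Ssets K kk. (\<Sum>c=1..kk. G (fst (rha_enum K S ! (c-1))) (snd (rha_enum K S ! (c-1)))) / real kk) / ?B"
    using Ssets_ne[OF assms(3)] by (subst integral_pmf_of_set) (auto simp only: finite_Ssets card_Ssets)
  also have "\<dots> = (\<Sum>S\<in>Ssets K kk. (\<Sum>x\<in>S. G (fst x) (snd x)) / real kk) / ?B"
    by (intro arg_cong2[where f="(/)"] sum.cong refl sum_enum) (auto simp: Ssets_def)
  also have "\<dots> = (?c1 * ?T) / (real kk * ?B)"
    by (simp add: sum_divide_distrib[symmetric] comb_sum1[OF assms(2)] sum_prod_split)
  also have "\<dots> = ?T / (real K * real K)"
  proof -
    have n: "(K*K) * ((K*K - 1) choose (kk - 1)) = ((K*K) choose kk) * kk"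
      using choose_id1[of kk "K*K"] assms by simp
    have "real ((K*K) * ((K*K - 1) choose (kk - 1))) = real (((K*K) choose kk) * kk)"
      by (simp only: n)
    then have "real (K*K) * ?c1 = ?B * real kk" by (simp only: of_nat_mult)
    moreover have "?B > 0" "real kk > 0" "real K > 0" using assms by auto
    ultimately show ?thesis by (simp add: field_simps)
  qed
  finally show ?thesis .
qed

lemma comb2_exp:
  fixes G :: "nat \<Rightarrow> nat \<Rightarrow> real"
  assumes "1 \<le> K" "1 \<le> kk" "kk \<le> K*K"
  shows "measure_pmf.expectation (pmf_of_set (Ssets K kk))
     (\<lambda>S. (\<Sum>c=1..kk. \<Sum>c'=1..kk. G (snd (rha_enum K S ! (c-1))) (fst (rha_enum K S ! (c'-1)))) / (real kk * real kk))
   = (\<Sum>a=1..K. \<Sum>b=1..K. G a b) / (real K * real K)"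
proof -
  let ?T = "\<Sum>a=1..K. \<Sum>b=1..K. G a b"
  let ?U = "{1..K}\<times>{1..K}"
  define c1 where "c1 = real ((K*K - 1) choose (kk - 1))"
  define c2 where "c2 = (if 2 \<le> kk then real ((K*K - 2) choose (kk - 2)) else 0)"
  let ?B = "real ((K*K) choose kk)"
  have "measure_pmf.expectation (pmf_of_set (Ssets K kk))
     (\<lambda>S. (\<Sum>c=1..kk. \<Sum>c'=1..kk. G (snd (rha_enum K S ! (c-1))) (fst (rha_enum K S ! (c'-1)))) / (real kk * real kk))
     = (\<Sum>S\<in>Ssets K kk. (\<Sum>c=1..kk. \<Sum>c'=1..kk. G (snd (rha_enum K S ! (c-1))) (fst (rha_enum K S ! (c'-1)))) / (real kk * real kk)) / ?B"
    using Ssets_ne[OF assms(3)] by (subst integral_pmf_of_set) (auto simp only: finite_Ssets card_Ssets)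
  also have "\<dots> = (\<Sum>S\<in>Ssets K kk. (\<Sum>x\<in>S. \<Sum>y\<in>S. G (snd x) (fst y)) / (real kk * real kk)) / ?B"
  proof (intro arg_cong2[where f="(/)"] sum.cong refl)
    fix S assume "S \<in> Ssets K kk"
    then have S: "S \<subseteq> ?U" "card S = kk" by (auto simp: Ssets_def)
    have "(\<Sum>c=1..kk. \<Sum>c'=1..kk. G (snd (rha_enum K S ! (c-1))) (fst (rha_enum K S ! (c'-1))))
        = (\<Sum>c=1..kk. \<Sum>y\<in>S. G (snd (rha_enum K S ! (c-1))) (fst y))"
      by (intro sum.cong refl sum_enum[OF S])
    also have "\<dots> = (\<Sum>x\<in>S. \<Sum>y\<in>S. G (snd x) (fst y))"
      by (rule sum_enum[OF S, where H="\<lambda>x. \<Sum>y\<in>S. G (snd x) (fst y)"])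
    finally show "(\<Sum>c=1..kk. \<Sum>c'=1..kk. G (snd (rha_enum K S ! (c-1))) (fst (rha_enum K S ! (c'-1))))
        = (\<Sum>x\<in>S. \<Sum>y\<in>S. G (snd x) (fst y))" .
  qed
  also have "\<dots> = (c2 * (\<Sum>x\<in>?U. \<Sum>y\<in>?U. G (snd x) (fst y)) + (c1 - c2) * (\<Sum>x\<in>?U. G (snd x) (fst x))) / (real kk * real kk * ?B)"
    by (simp add: sum_divide_distrib[symmetric] comb_sum2[OF assms(2)] c1_def c2_def)
  also have "(\<Sum>x\<in>?U. \<Sum>y\<in>?U. G (snd x) (fst y)) = real K * real K * ?T"
  proof -
    have "(\<Sum>x\<in>?U. \<Sum>y\<in>?U. G (snd x) (fst y)) = (\<Sum>x\<in>?U. real K * (\<Sum>a=1..K. G (snd x) a))"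
      by (intro sum.cong refl) (rule sum_fst_U[where h="\<lambda>a. G (snd _) a"])
    also have "\<dots> = real K * (real K * ?T)"
      using sum_snd_U[where h="\<lambda>b. real K * (\<Sum>a=1..K. G b a)" and K=K]
      by (simp add: sum_distrib_left[symmetric])
    also have "\<dots> = real K * real K * ?T" by simp
    finally show ?thesis .
  qed
  also have "(\<Sum>x\<in>?U. G (snd x) (fst x)) = ?T"
    using sum_prod_split[where f="\<lambda>a b. G b a" and A="{1..K}" and B="{1..K}"] sum.swap[of "\<lambda>a b. G b a" "{1..K}" "{1..K}"]
    by simp
  also have "c2 * (real K * real K * ?T) + (c1 - c2) * ?T = (c2 * (real (K*K) - 1) + c1) * ?T"
    by (simp add: algebra_simps)
  also have "c2 * (real (K*K) - 1) = (real kk - 1) * c1"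
  proof (cases "2 \<le> kk")
    case True
    then have "2 \<le> K*K" using assms by simp
    then have n: "(K*K - 1) * ((K*K - 2) choose (kk - 2)) = ((K*K - 1) choose (kk - 1)) * (kk - 1)"
      using choose_id2[OF True] by simp
    have "real ((K*K - 1) * ((K*K - 2) choose (kk - 2))) = real (((K*K - 1) choose (kk - 1)) * (kk - 1))"
      by (simp only: n)
    then have "real (K*K - 1) * real ((K*K - 2) choose (kk - 2)) = real ((K*K - 1) choose (kk - 1)) * real (kk - 1)"
      by (simp only: of_nat_mult)
    moreover have "real (K*K - 1) = real K * real K - 1" "real (kk - 1) = real kk - 1"
      using \<open>2 \<le> K*K\<close> True by (simp_all add: of_nat_diff flip: of_nat_mult)
    ultimately have "(real K * real K - 1) * real ((K*K - 2) choose (kk - 2)) = real ((K*K - 1) choose (kk - 1)) * (real kk - 1)"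
      by simp
    then show ?thesis using True unfolding c1_def c2_def by (simp add: algebra_simps)
  next
    case False
    then show ?thesis using assms by (simp add: c2_def)
  qed
  also have "c1 = ?B * real kk / (real K * real K)"
  proof -
    have n: "(K*K) * ((K*K - 1) choose (kk - 1)) = ((K*K) choose kk) * kk"
      using choose_id1[of kk "K*K"] assms by simp
    have "real ((K*K) * ((K*K - 1) choose (kk - 1))) = real (((K*K) choose kk) * kk)"
      by (simp only: n)
    then have "real (K*K) * c1 = ?B * real kk" unfolding c1_def by (simp only: of_nat_mult)
    moreover have "real K * real K \<noteq> 0" using assms by simp
    ultimately show ?thesis by (simp add: eq_divide_eq mult.commute)
  qed
  also have "((real kk - 1) * (?B * real kk / (real K * real K)) + ?B * real kk / (real K * real K)) * ?T / (real kk * real kk * ?B) = ?T / (real K * real K)"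
  proof -
    have "?B > 0" "real kk > 0" "real K > 0" using assms by auto
    then show ?thesis by (simp add: field_simps)
  qed
  finally show ?thesis .
qed



function idx :: "(nat \<Rightarrow> nat) \<Rightarrow> (nat \<Rightarrow> (nat \<times> nat) set \<times> nat) \<Rightarrow> nat \<Rightarrow> nat \<Rightarrow> nat" where
  "idx k \<omega> n p = (if p \<le> 1 then snd (\<omega> n) else
     (let e = rha_enum (k n) (fst (\<omega> (Suc n))) ! (idx k \<omega> (Suc n) (p div 2) - 1)
      in if even p then fst e else snd e))"
  by auto
termination by (relation "Wellfounded.measure (\<lambda>(k,\<omega>,n,p). p)") auto

declare idx.simps[simp del]

lemma idx_1: "idx k \<omega> n 1 = snd (\<omega> n)"
  by (simp add: idx.simps)

lemma idx_1': "idx k \<omega> n (Suc 0) = snd (\<omega> n)"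
  by (simp add: idx.simps)

lemma idx_even: "q \<ge> 1 \<Longrightarrow> idx k \<omega> n (2*q) = fst (rha_enum (k n) (fst (\<omega> (Suc n))) ! (idx k \<omega> (Suc n) q - 1))"
  by (subst idx.simps) (simp add: Let_def)

lemma idx_odd: "q \<ge> 1 \<Longrightarrow> idx k \<omega> n (2*q+1) = snd (rha_enum (k n) (fst (\<omega> (Suc n))) ! (idx k \<omega> (Suc n) q - 1))"
  by (subst idx.simps) (simp add: Let_def)

lemma len_Y: "length (rha_Y k \<omega> n j) = 2^n"
  by (induction n arbitrary: j) (simp_all add: Let_def)

definition blk :: "(nat \<Rightarrow> nat) \<Rightarrow> (nat \<Rightarrow> (nat \<times> nat) set \<times> nat) \<Rightarrow> nat \<Rightarrow> nat list" where
  "blk k \<omega> n = rha_Y k \<omega> n (snd (\<omega> n))"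

definition wd :: "(nat \<Rightarrow> nat) \<Rightarrow> (nat \<Rightarrow> (nat \<times> nat) set \<times> nat) \<Rightarrow> nat \<Rightarrow> nat" where
  "wd k \<omega> t = concat (map (blk k \<omega>) [0..<t]) ! (t - 1)"

lemma len_concat_blk: "length (concat (map (blk k \<omega>) [0..<N])) = 2^N - 1"
proof (induction N)
  case 0 then show ?case by simp
next
  case (Suc N)
  have "(1::nat) \<le> 2^N" by simp
  then show ?case using Suc by (simp add: blk_def len_Y)
qed

lemma nth_concat_blk:
  assumes "2^m \<le> t" "t < 2^Suc m" "m < N"
  shows "concat (map (blk k \<omega>) [0..<N]) ! (t-1) = blk k \<omega> m ! (t - 2^m)"
  using assms(3)
proof (induction N)
  case 0 then show ?case by simp
next
  case (Suc N)
  have pos: "(1::nat) \<le> 2^m" by simp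
  show ?case
  proof (cases "m < N")
    case True
    have "2^Suc m \<le> (2::nat)^N" using True by (intro power_increasing) auto
    then have "t - 1 < length (concat (map (blk k \<omega>) [0..<N]))"
      using assms len_concat_blk[of k \<omega> N] pos by linarith
    then show ?thesis using Suc True by (simp add: nth_append)
  next
    case False
    then have "m = N" using Suc by simp
    have c: "concat (map (blk k \<omega>) [0..<Suc N]) = concat (map (blk k \<omega>) [0..<N]) @ blk k \<omega> N" by simp
    have "\<not> (t - 1 < 2^N - 1)" "t - 1 - (2^N - 1) = t - 2^N" using assms pos \<open>m = N\<close> by auto
    then show ?thesis unfolding c using len_concat_blk[of k \<omega> N] \<open>m = N\<close>
      by (simp only: nth_append if_False)
  qed
qed

lemma ex_log: "1 \<le> (t::nat) \<Longrightarrow> \<exists>m. 2^m \<le> t \<and> t < 2^Suc m"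
  using ex_power_ivl1[of 2 t] by auto

lemma concat_blk_eq_wd:
  assumes "1 \<le> t" "t \<le> N"
  shows "concat (map (blk k \<omega>) [0..<N]) ! (t-1) = wd k \<omega> t"
proof -
  obtain m where m: "2^m \<le> t" "t < 2^Suc m" using ex_log[OF assms(1)] by blast
  have "m < 2^m" by (rule less_exp)
  then have "m < t" using m by linarith
  then show ?thesis unfolding wd_def
    using nth_concat_blk[OF m, of t k \<omega>] nth_concat_blk[OF m, of N k \<omega>] assms by simp
qed

lemma wd_blk:
  assumes "2^m \<le> t" "t < 2^Suc m"
  shows "wd k \<omega> t = blk k \<omega> m ! (t - 2^m)"
proof -
  have "m < 2^m" by (rule less_exp)
  then have "m < t" using assms by linarith
  then show ?thesis unfolding wd_def using nth_concat_blk[OF assms, of t k \<omega>] by simp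
qed

lemma Xseg_map:
  assumes "1 \<le> a"
  shows "rha_Xseg k \<omega> a b = map (wd k \<omega>) [a..<b+1]"
proof (rule nth_equalityI)
  have "b \<le> 2^b - 1"
  proof -
    have "b < 2^b" by (rule less_exp)
    then show ?thesis by linarith
  qed
  then show len: "length (rha_Xseg k \<omega> a b) = length (map (wd k \<omega>) [a..<b+1])"
    unfolding rha_Xseg_def using len_concat_blk[of k \<omega> b] assms by (simp add: blk_def[symmetric] min_def Suc_diff_le)
  fix i assume "i < length (rha_Xseg k \<omega> a b)"
  then have i: "a + i \<le> b" using len assms by (auto split: if_splits)
  have "rha_Xseg k \<omega> a b ! i = concat (map (blk k \<omega>) [0..<b]) ! (a + i - 1)"
    unfolding rha_Xseg_def blk_def[symmetric] using i assms \<open>b \<le> 2^b - 1\<close> len_concat_blk[of k \<omega> b]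
    by (simp add: nth_take)
  also have "\<dots> = wd k \<omega> (a + i)" using concat_blk_eq_wd[of "a+i" b] i assms by simp
  finally show "rha_Xseg k \<omega> a b ! i = map (wd k \<omega>) [a..<b+1] ! i" using i by (simp del: upt_Suc)
qed

lemma wd_idx:
  assumes "1 \<le> p" "r < 2^n"
  shows "wd k \<omega> (p * 2^n + r) = rha_Y k \<omega> n (idx k \<omega> n p) ! r"
  using assms
proof (induction p arbitrary: n r rule: less_induct)
  case (less p)
  show ?case
  proof (cases "p = 1")
    case True
    then show ?thesis using less.prems wd_blk[of n "2^n + r" k \<omega>]
      by (simp add: idx_1' blk_def)
  next
    case False
    define q where "q = p div 2"
    have q1: "1 \<le> q" "q < p" using False less.prems unfolding q_def by auto
    define b where "b = p mod 2"
    define r' where "r' = b * 2^n + r"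
    have pe: "p = 2*q + b" unfolding q_def b_def by simp
    have r': "r' < 2^Suc n" using less.prems unfolding r'_def b_def by (cases "even p") (auto simp: odd_iff_mod_2_eq_one)
    have eq: "p * 2^n + r = q * 2^Suc n + r'"
      unfolding r'_def using pe by (simp add: algebra_simps)
    have IH: "wd k \<omega> (q * 2^Suc n + r') = rha_Y k \<omega> (Suc n) (idx k \<omega> (Suc n) q) ! r'"
      using less.IH[OF q1(2) q1(1) r'] .
    show ?thesis
    proof (cases "even p")
      case True
      then have p: "p = 2*q" unfolding q_def by simp
      have "r' = r" using True unfolding r'_def b_def by simp
      have ip: "idx k \<omega> n p = fst (rha_enum (k n) (fst (\<omega> (Suc n))) ! (idx k \<omega> (Suc n) q - 1))"
        using idx_even[OF q1(1)] p by simp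
      show ?thesis unfolding eq IH ip using \<open>r' = r\<close> less.prems
        by (simp add: Let_def nth_append len_Y)
    next
      case False
      then have p: "p = 2*q+1" unfolding q_def by simp
      have "r' = 2^n + r" using False unfolding r'_def b_def by (simp add: odd_iff_mod_2_eq_one)
      have ip: "idx k \<omega> n p = snd (rha_enum (k n) (fst (\<omega> (Suc n))) ! (idx k \<omega> (Suc n) q - 1))"
        using idx_odd[OF q1(1)] p by simp
      show ?thesis unfolding eq IH ip using \<open>r' = 2^n + r\<close> less.prems
        by (simp add: Let_def nth_append len_Y)
    qed
  qed
qed

lemma Xblock_eq:
  assumes "1 \<le> j"
  shows "rha_Xblock k \<omega> n j = rha_Y k \<omega> n (idx k \<omega> n j)"
proof -
  have "rha_Xblock k \<omega> n j = map (wd k \<omega>) [j * 2^n..<(j+1)*2^n]"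
    unfolding rha_Xblock_def using assms by (subst Xseg_map) auto
  also have "\<dots> = map (\<lambda>r. wd k \<omega> (j * 2^n + r)) [0..<2^n]"
    by (simp add: map_add_upt[symmetric] algebra_simps)
  also have "\<dots> = map (\<lambda>r. rha_Y k \<omega> n (idx k \<omega> n j) ! r) [0..<2^n]"
    using wd_idx[OF assms] by simp
  also have "\<dots> = rha_Y k \<omega> n (idx k \<omega> n j)"
    by (rule nth_equalityI) (simp_all add: len_Y)
  finally show ?thesis .
qed



lemma exp_fin:
  fixes f :: "'a \<Rightarrow> real"
  assumes "finite (set_pmf M)"
  shows "measure_pmf.expectation M f = (\<Sum>x\<in>set_pmf M. pmf M x * f x)"
  by (subst integral_measure_pmf_real[OF assms]) (auto simp: mult.commute)

lemma finite_set_pair_pmf: "finite (set_pmf A) \<Longrightarrow> finite (set_pmf B) \<Longrightarrow> finite (set_pmf (pair_pmf A B))"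
  by simp

lemma pmf_pair_fst_snd: "pmf (pair_pmf A B) x = pmf A (fst x) * pmf B (snd x)"
  by (cases x) (simp add: pmf_pair)

lemma exp_pair:
  fixes f :: "'a \<times> 'b \<Rightarrow> real"
  assumes "finite (set_pmf A)" "finite (set_pmf B)"
  shows "measure_pmf.expectation (pair_pmf A B) f =
         measure_pmf.expectation A (\<lambda>a. measure_pmf.expectation B (\<lambda>b. f (a, b)))"
proof -
  have "measure_pmf.expectation (pair_pmf A B) f = (\<Sum>x\<in>set_pmf A \<times> set_pmf B. pmf (pair_pmf A B) x * f x)"
    using assms by (subst exp_fin) auto
  also have "\<dots> = (\<Sum>a\<in>set_pmf A. \<Sum>b\<in>set_pmf B. pmf A a * (pmf B b * f (a, b)))"
    by (simp add: sum.cartesian_product pmf_pair_fst_snd mult.assoc case_prod_beta)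
  also have "\<dots> = measure_pmf.expectation A (\<lambda>a. measure_pmf.expectation B (\<lambda>b. f (a, b)))"
    using assms by (simp add: exp_fin sum_distrib_left)
  finally show ?thesis .
qed

lemma exp_swap:
  fixes g :: "'a \<Rightarrow> 'b \<Rightarrow> real"
  assumes "finite (set_pmf A)" "finite (set_pmf B)"
  shows "measure_pmf.expectation A (\<lambda>a. measure_pmf.expectation B (\<lambda>b. g a b)) =
         measure_pmf.expectation B (\<lambda>b. measure_pmf.expectation A (\<lambda>a. g a b))"
  using assms by (simp add: exp_fin sum_distrib_left sum.swap[of _ "set_pmf A"] mult.left_commute)

lemma finite_set_Pi_pmf:
  assumes "finite A" "\<And>i. finite (set_pmf (p i))"
  shows "finite (set_pmf (Pi_pmf A d p))"
  using assms by (subst set_Pi_pmf) (auto intro!: finite_PiE_dflt)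

lemma exp_const: "measure_pmf.expectation M (\<lambda>x. c) = (c::real)"
  by simp

lemma resample:
  fixes F :: "('i \<Rightarrow> 'b) \<Rightarrow> real"
  assumes A: "finite A" "m \<in> A" and fin: "\<And>i. finite (set_pmf (p i))"
  shows "measure_pmf.expectation (Pi_pmf A d p) F =
         measure_pmf.expectation (Pi_pmf A d p) (\<lambda>w. measure_pmf.expectation (p m) (\<lambda>x. F (w(m := x))))"
proof -
  let ?B = "A - {m}"
  have AB: "A = insert m ?B" using A by auto
  have PI: "Pi_pmf A d p = map_pmf (\<lambda>(y,f). f(m:=y)) (pair_pmf (p m) (Pi_pmf ?B d p))"
    by (subst AB, rule Pi_pmf_insert) (use A in auto)
  have fB: "finite (set_pmf (Pi_pmf ?B d p))" using A fin by (intro finite_set_Pi_pmf) auto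
  have "measure_pmf.expectation (Pi_pmf A d p) F =
        measure_pmf.expectation (p m) (\<lambda>y. measure_pmf.expectation (Pi_pmf ?B d p) (\<lambda>f. F (f(m:=y))))"
    unfolding PI by (simp add: exp_pair[OF fin fB])
  also have "\<dots> = measure_pmf.expectation (Pi_pmf ?B d p) (\<lambda>f. measure_pmf.expectation (p m) (\<lambda>y. F (f(m:=y))))"
    by (rule exp_swap[OF fin fB])
  also have "\<dots> = measure_pmf.expectation (Pi_pmf A d p) (\<lambda>w. measure_pmf.expectation (p m) (\<lambda>x. F (w(m := x))))"
    unfolding PI by (simp add: exp_pair[OF fin fB])
  finally show ?thesis .
qed

lemma exp_sum:
  fixes f :: "'i \<Rightarrow> 'a \<Rightarrow> real"
  assumes "finite (set_pmf M)"
  shows "measure_pmf.expectation M (\<lambda>x. \<Sum>i\<in>I. f i x) = (\<Sum>i\<in>I. measure_pmf.expectation M (f i))"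
  by (subst Bochner_Integration.integral_sum) (auto intro: integrable_measure_pmf_finite[OF assms])

lemma exp_div:
  fixes f :: "'a \<Rightarrow> real"
  shows "measure_pmf.expectation M (\<lambda>x. f x / c) = measure_pmf.expectation M f / c"
  by simp



definition kok :: "(nat \<Rightarrow> nat) \<Rightarrow> bool" where
  "kok k = ((\<forall>i. 0 < k i) \<and> (\<forall>i\<ge>1. k (i - 1) \<le> k i \<and> k i \<le> (k (i - 1))\<^sup>2))"

definition Q :: "(nat \<Rightarrow> nat) \<Rightarrow> nat \<Rightarrow> (nat \<Rightarrow> (nat \<times> nat) set \<times> nat) pmf" where
  "Q k M = Pi_pmf {..M} ({}, 0) (rha_level_pmf k)"

definition lowdep :: "nat \<Rightarrow> (nat \<Rightarrow> nat \<Rightarrow> (nat \<Rightarrow> (nat \<times> nat) set \<times> nat) \<Rightarrow> real) \<Rightarrow> bool" where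
  "lowdep n G = (\<forall>a b w w'. (\<forall>i. 1 \<le> i \<and> i \<le> n \<longrightarrow> fst (w i) = fst (w' i)) \<longrightarrow> G a b w = G a b w')"

definition avg :: "nat \<Rightarrow> (nat \<Rightarrow> nat \<Rightarrow> 'w \<Rightarrow> real) \<Rightarrow> 'w \<Rightarrow> real" where
  "avg K G w = (\<Sum>a=1..K. \<Sum>b=1..K. G a b w) / (real K * real K)"

lemma kok_1: "kok k \<Longrightarrow> 0 < k i"
  unfolding kok_def by (drule conjunct1) (erule spec)

lemma kok_2: "kok k \<Longrightarrow> k (Suc n) \<le> (k n)\<^sup>2"
  unfolding kok_def by (drule conjunct2, drule spec[of _ "Suc n"]) simp

lemma kok_pos: "kok k \<Longrightarrow> 1 \<le> k i"
  using kok_1[of k i] by linarith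

lemma kok_sq: "kok k \<Longrightarrow> k (Suc n) \<le> k n * k n"
  using kok_2[of k n] by (simp add: power2_eq_square)

lemma lvl_Suc: "rha_level_pmf k (Suc n) = pair_pmf (pmf_of_set (Ssets (k n) (k (Suc n)))) (pmf_of_set {1..k (Suc n)})"
  by (simp add: rha_level_pmf_def Ssets_def)

lemma lvl_0: "rha_level_pmf k 0 = map_pmf (\<lambda>c. ({}, c)) (pmf_of_set {1..k 0})"
  by (simp add: rha_level_pmf_def)

lemma ne_ivl: "kok k \<Longrightarrow> {1..k i} \<noteq> {}"
  using kok_pos[of k i] by auto

lemma lvl_fin: "kok k \<Longrightarrow> finite (set_pmf (rha_level_pmf k i))"
proof (cases i)
  case 0
  assume "kok k" then show ?thesis using 0 ne_ivl[of k 0] by (simp add: lvl_0)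
next
  case (Suc n)
  assume kk: "kok k"
  then have "Ssets (k n) (k (Suc n)) \<noteq> {}" using kok_sq[OF kk] Ssets_ne by blast
  then show ?thesis using Suc ne_ivl[OF kk, of "Suc n"] by (simp add: lvl_Suc finite_Ssets)
qed

lemma Q_fin: "kok k \<Longrightarrow> finite (set_pmf (Q k M))"
  unfolding Q_def by (intro finite_set_Pi_pmf lvl_fin) auto

lemma Q_resample:
  fixes F :: "(nat \<Rightarrow> (nat \<times> nat) set \<times> nat) \<Rightarrow> real"
  assumes "kok k" "m \<le> M"
  shows "measure_pmf.expectation (Q k M) F =
    measure_pmf.expectation (Q k M) (\<lambda>w. measure_pmf.expectation (rha_level_pmf k m) (\<lambda>x. F (w(m := x))))"
  unfolding Q_def by (rule resample[where p="rha_level_pmf k"]) (use assms lvl_fin in auto)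

lemma lowdep_upd: "lowdep n G \<Longrightarrow> n < m \<Longrightarrow> G a b (w(m := x)) = G a b w"
proof -
  assume a: "lowdep n G" "n < m"
  have "\<forall>i. 1 \<le> i \<and> i \<le> n \<longrightarrow> fst ((w(m:=x)) i) = fst (w i)" using a(2) by auto
  then show ?thesis using a(1) unfolding lowdep_def by blast
qed

lemma lowdep_upd_snd: "lowdep n G \<Longrightarrow> G a b (w(m := x)) = G a b (w(m := (fst x, c)))"
proof -
  assume a: "lowdep n G"
  have "\<forall>i. 1 \<le> i \<and> i \<le> n \<longrightarrow> fst ((w(m:=x)) i) = fst ((w(m := (fst x, c))) i)" by auto
  then show ?thesis using a unfolding lowdep_def by blast
qed

lemma exp_lvl_fst:
  fixes f :: "(nat \<times> nat) set \<Rightarrow> real"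
  assumes "kok k"
  shows "measure_pmf.expectation (rha_level_pmf k (Suc n)) (\<lambda>x. f (fst x)) =
         measure_pmf.expectation (pmf_of_set (Ssets (k n) (k (Suc n)))) f"
  unfolding lvl_Suc by (rule expectation_pair_pmf_fst)

lemma exp_lvl_pair:
  fixes f :: "(nat \<times> nat) set \<Rightarrow> nat \<Rightarrow> real"
  assumes "kok k"
  shows "measure_pmf.expectation (rha_level_pmf k (Suc n)) (\<lambda>x. f (fst x) (snd x)) =
         measure_pmf.expectation (pmf_of_set (Ssets (k n) (k (Suc n))))
            (\<lambda>S. (\<Sum>c=1..k (Suc n). f S c) / real (k (Suc n)))"
proof -
  have ne: "Ssets (k n) (k (Suc n)) \<noteq> {}" using kok_sq[OF assms] Ssets_ne by blast
  show ?thesis unfolding lvl_Suc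
    by (subst exp_pair) (use ne ne_ivl[OF assms, of "Suc n"] in \<open>auto simp: finite_Ssets integral_pmf_of_set\<close>)
qed



abbreviation EQ :: "(nat \<Rightarrow> nat) \<Rightarrow> nat \<Rightarrow> ((nat \<Rightarrow> (nat \<times> nat) set \<times> nat) \<Rightarrow> real) \<Rightarrow> real" where
  "EQ k M f \<equiv> measure_pmf.expectation (Q k M) f"

lemma idx_odd': "q \<ge> 1 \<Longrightarrow> idx k \<omega> n (Suc (2*q)) = snd (rha_enum (k n) (fst (\<omega> (Suc n))) ! (idx k \<omega> (Suc n) q - 1))"
  using idx_odd by simp

lemma sum_const_ivl: "(\<Sum>c'=1..K. (x::real)) = real K * x"
  by simp

lemma claim_even_step:
  assumes kok: "kok k" and q: "1 \<le> q" and M: "n + 2*q + 1 \<le> M" and G: "lowdep n G"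
    and IH: "\<And>H. lowdep (Suc n) H \<Longrightarrow>
       EQ k M (\<lambda>w. H (idx k w (Suc n) q) (idx k w (Suc n) (q+1)) w) = EQ k M (\<lambda>w. avg (k (Suc n)) H w)"
  shows "EQ k M (\<lambda>w. G (idx k w n (2*q)) (idx k w n (2*q+1)) w) = EQ k M (\<lambda>w. avg (k n) G w)"
proof -
  define kk where "kk = k (Suc n)"
  define e where "e w = rha_enum (k n) (fst (w (Suc n)))" for w :: "nat \<Rightarrow> (nat \<times> nat) set \<times> nat"
  define H where "H c (c'::nat) w = G (fst (e w ! (c-1))) (snd (e w ! (c-1))) w" for c c' w
  define F where "F w = (\<Sum>c=1..kk. G (fst (e w ! (c-1))) (snd (e w ! (c-1))) w) / real kk" for w
  have H: "lowdep (Suc n) H"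
    unfolding lowdep_def
  proof (intro allI impI)
    fix a b :: nat and w w' :: "nat \<Rightarrow> (nat \<times> nat) set \<times> nat" assume a: "\<forall>i. 1 \<le> i \<and> i \<le> Suc n \<longrightarrow> fst (w i) = fst (w' i)"
    then have "e w = e w'" unfolding e_def by auto
    moreover have "G x y w = G x y w'" for x y using a G unfolding lowdep_def by auto
    ultimately show "H a b w = H a b w'" unfolding H_def by simp
  qed
  have "EQ k M (\<lambda>w. G (idx k w n (2*q)) (idx k w n (2*q+1)) w) =
        EQ k M (\<lambda>w. H (idx k w (Suc n) q) (idx k w (Suc n) (q+1)) w)"
    unfolding H_def e_def using q by (simp add: idx_even idx_odd')
  also have "\<dots> = EQ k M (\<lambda>w. avg (k (Suc n)) H w)"
    by (rule IH[OF H])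
  also have "\<dots> = EQ k M F"
  proof -
    have "avg (k (Suc n)) H w = F w" for w
    proof -
      have "avg (k (Suc n)) H w = (\<Sum>c=1..kk. real kk * H c 0 w) / (real kk * real kk)"
        unfolding avg_def kk_def[symmetric] H_def by simp
      also have "\<dots> = F w"
        unfolding F_def H_def using kok_pos[OF kok, of "Suc n"]
        by (simp add: sum_distrib_left[symmetric] kk_def)
      finally show ?thesis .
    qed
    then show ?thesis by simp
  qed
  also have "\<dots> = EQ k M (\<lambda>w. measure_pmf.expectation (rha_level_pmf k (Suc n)) (\<lambda>x. F (w(Suc n := x))))"
    by (rule Q_resample[OF kok]) (use M in simp)
  also have "\<dots> = EQ k M (\<lambda>w. avg (k n) G w)"
  proof -
    have "measure_pmf.expectation (rha_level_pmf k (Suc n)) (\<lambda>x. F (w(Suc n := x))) = avg (k n) G w" for w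
    proof -
      have "F (w(Suc n := x)) = (\<Sum>c=1..kk. G (fst (rha_enum (k n) (fst x) ! (c-1))) (snd (rha_enum (k n) (fst x) ! (c-1))) w) / real kk" for x
        unfolding F_def e_def using lowdep_upd[OF G, of "Suc n"] by simp
      then have "measure_pmf.expectation (rha_level_pmf k (Suc n)) (\<lambda>x. F (w(Suc n := x))) =
          measure_pmf.expectation (rha_level_pmf k (Suc n)) (\<lambda>x. (\<lambda>S. (\<Sum>c=1..kk. G (fst (rha_enum (k n) S ! (c-1))) (snd (rha_enum (k n) S ! (c-1))) w) / real kk) (fst x))"
        by simp
      also have "\<dots> = measure_pmf.expectation (pmf_of_set (Ssets (k n) (k (Suc n))))
          (\<lambda>S. (\<Sum>c=1..kk. G (fst (rha_enum (k n) S ! (c-1))) (snd (rha_enum (k n) S ! (c-1))) w) / real kk)"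
        by (rule exp_lvl_fst[OF kok])
      also have "\<dots> = avg (k n) G w"
        unfolding avg_def kk_def
        by (rule comb1_exp[where G="\<lambda>a b. G a b w"]) (use kok_pos[OF kok] kok_sq[OF kok] in auto)
      finally show ?thesis .
    qed
    then show ?thesis by simp
  qed
  finally show ?thesis .
qed

lemma claim_odd_step:
  assumes kok: "kok k" and q: "1 \<le> q" and M: "n + 2*q + 2 \<le> M" and G: "lowdep n G"
    and IH: "\<And>H. lowdep (Suc n) H \<Longrightarrow>
       EQ k M (\<lambda>w. H (idx k w (Suc n) q) (idx k w (Suc n) (q+1)) w) = EQ k M (\<lambda>w. avg (k (Suc n)) H w)"
  shows "EQ k M (\<lambda>w. G (idx k w n (2*q+1)) (idx k w n (2*(q+1))) w) = EQ k M (\<lambda>w. avg (k n) G w)"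
proof -
  define kk where "kk = k (Suc n)"
  define e where "e w = rha_enum (k n) (fst (w (Suc n)))" for w :: "nat \<Rightarrow> (nat \<times> nat) set \<times> nat"
  define H where "H c c' w = G (snd (e w ! (c-1))) (fst (e w ! (c'-1))) w" for c c' w
  define F where "F w = (\<Sum>c=1..kk. \<Sum>c'=1..kk. G (snd (e w ! (c-1))) (fst (e w ! (c'-1))) w) / (real kk * real kk)" for w
  have H: "lowdep (Suc n) H"
    unfolding lowdep_def
  proof (intro allI impI)
    fix a b :: nat and w w' :: "nat \<Rightarrow> (nat \<times> nat) set \<times> nat"
    assume a: "\<forall>i. 1 \<le> i \<and> i \<le> Suc n \<longrightarrow> fst (w i) = fst (w' i)"
    then have "e w = e w'" unfolding e_def by auto
    moreover have "G x y w = G x y w'" for x y using a G unfolding lowdep_def by auto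
    ultimately show "H a b w = H a b w'" unfolding H_def by simp
  qed
  have q1: "1 \<le> q + 1" by simp
  have "EQ k M (\<lambda>w. G (idx k w n (2*q+1)) (idx k w n (2*(q+1))) w) =
        EQ k M (\<lambda>w. H (idx k w (Suc n) q) (idx k w (Suc n) (q+1)) w)"
    unfolding H_def e_def using idx_odd[OF q] idx_even[OF q1] by simp
  also have "\<dots> = EQ k M (\<lambda>w. avg (k (Suc n)) H w)"
    by (rule IH[OF H])
  also have "\<dots> = EQ k M F"
    unfolding avg_def F_def H_def kk_def by simp
  also have "\<dots> = EQ k M (\<lambda>w. measure_pmf.expectation (rha_level_pmf k (Suc n)) (\<lambda>x. F (w(Suc n := x))))"
    by (rule Q_resample[OF kok]) (use M in simp)
  also have "\<dots> = EQ k M (\<lambda>w. avg (k n) G w)"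
  proof -
    have "measure_pmf.expectation (rha_level_pmf k (Suc n)) (\<lambda>x. F (w(Suc n := x))) = avg (k n) G w" for w
    proof -
      have "F (w(Suc n := x)) = (\<Sum>c=1..kk. \<Sum>c'=1..kk. G (snd (rha_enum (k n) (fst x) ! (c-1))) (fst (rha_enum (k n) (fst x) ! (c'-1))) w) / (real kk * real kk)" for x
        unfolding F_def e_def using lowdep_upd[OF G, of "Suc n"] by simp
      then have "measure_pmf.expectation (rha_level_pmf k (Suc n)) (\<lambda>x. F (w(Suc n := x))) =
          measure_pmf.expectation (rha_level_pmf k (Suc n)) (\<lambda>x. (\<lambda>S. (\<Sum>c=1..kk. \<Sum>c'=1..kk. G (snd (rha_enum (k n) S ! (c-1))) (fst (rha_enum (k n) S ! (c'-1))) w) / (real kk * real kk)) (fst x))"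
        by simp
      also have "\<dots> = measure_pmf.expectation (pmf_of_set (Ssets (k n) (k (Suc n))))
          (\<lambda>S. (\<Sum>c=1..kk. \<Sum>c'=1..kk. G (snd (rha_enum (k n) S ! (c-1))) (fst (rha_enum (k n) S ! (c'-1))) w) / (real kk * real kk))"
        by (rule exp_lvl_fst[OF kok])
      also have "\<dots> = avg (k n) G w"
        unfolding avg_def kk_def
        by (rule comb2_exp[where G="\<lambda>a b. G a b w"]) (use kok_pos[OF kok] kok_sq[OF kok] in auto)
      finally show ?thesis .
    qed
    then show ?thesis by simp
  qed
  finally show ?thesis .
qed

lemma split_level:
  fixes \<Psi> :: "nat \<Rightarrow> (nat \<times> nat) set \<times> nat \<Rightarrow> real"
  assumes kok: "kok k" and P: "\<And>c x c'. \<Psi> c x = \<Psi> c (fst x, c')"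
  shows "measure_pmf.expectation (rha_level_pmf k n) (\<lambda>x. \<Psi> (snd x) x) =
         measure_pmf.expectation (rha_level_pmf k n) (\<lambda>x. (\<Sum>c=1..k n. \<Psi> c x) / real (k n))"
proof -
  have Pe: "\<Psi> c (S, c') = \<Psi> c (S, 1)" for c S c'
    using P[of c "(S, c')" 1] by simp
  show ?thesis
proof (cases n)
  case 0
  have ne: "{1..k 0} \<noteq> {}" using ne_ivl[OF kok] .
  have K: "real (k 0) > 0" using kok_pos[OF kok, of 0] by simp
  have "measure_pmf.expectation (rha_level_pmf k n) (\<lambda>x. \<Psi> (snd x) x) = (\<Sum>c=1..k 0. \<Psi> c ({}, c)) / real (k 0)"
    using 0 ne by (simp add: lvl_0 integral_pmf_of_set)
  also have "\<dots> = (\<Sum>c=1..k 0. \<Psi> c ({}, 1)) / real (k 0)"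
    by (subst sum.cong[OF refl Pe]) simp
  also have "\<dots> = (\<Sum>c'=1..k 0. (\<Sum>c=1..k 0. \<Psi> c ({}, c')) / real (k 0)) / real (k 0)"
  proof -
    have "(\<Sum>c'=1..k 0. (\<Sum>c=1..k 0. \<Psi> c ({}, c')) / real (k 0)) = (\<Sum>c'=1..k 0. (\<Sum>c=1..k 0. \<Psi> c ({}, 1)) / real (k 0))"
      by (intro sum.cong refl arg_cong2[where f="(/)"] Pe)
    also have "\<dots> = (\<Sum>c=1..k 0. \<Psi> c ({}, 1))" using K by simp
    finally show ?thesis by simp
  qed
  also have "\<dots> = measure_pmf.expectation (rha_level_pmf k n) (\<lambda>x. (\<Sum>c=1..k n. \<Psi> c x) / real (k n))"
    using 0 ne by (simp add: lvl_0 integral_pmf_of_set sum_divide_distrib)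
  finally show ?thesis .
next
  case (Suc m)
  have ne: "{1..k (Suc m)} \<noteq> {}" using ne_ivl[OF kok] .
  have neS: "Ssets (k m) (k (Suc m)) \<noteq> {}" using kok_sq[OF kok] Ssets_ne by blast
  have K: "real (k (Suc m)) > 0" using kok_pos[OF kok, of "Suc m"] by simp
  have fins: "finite (set_pmf (pmf_of_set (Ssets (k m) (k (Suc m)))))" "finite (set_pmf (pmf_of_set {1..k (Suc m)}))"
    using ne neS by (auto simp: finite_Ssets)
  have "measure_pmf.expectation (rha_level_pmf k n) (\<lambda>x. \<Psi> (snd x) x) =
     measure_pmf.expectation (pmf_of_set (Ssets (k m) (k (Suc m)))) (\<lambda>S. (\<Sum>c=1..k (Suc m). \<Psi> c (S, c)) / real (k (Suc m)))"
    unfolding Suc lvl_Suc by (subst exp_pair[OF fins]) (use ne in \<open>simp add: integral_pmf_of_set\<close>)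
  also have "\<dots> = measure_pmf.expectation (pmf_of_set (Ssets (k m) (k (Suc m)))) (\<lambda>S. (\<Sum>c=1..k (Suc m). \<Psi> c (S, 1)) / real (k (Suc m)))"
    by (subst sum.cong[OF refl Pe]) simp
  also have "\<dots> = measure_pmf.expectation (rha_level_pmf k n) (\<lambda>x. (\<Sum>c=1..k n. \<Psi> c x) / real (k n))"
  proof -
    have h: "measure_pmf.expectation (pmf_of_set {1..k (Suc m)}) (\<lambda>b. (\<Sum>c=1..k (Suc m). \<Psi> c (S, b)) / real (k (Suc m)))
       = (\<Sum>c=1..k (Suc m). \<Psi> c (S, 1)) / real (k (Suc m))" for S
    proof -
      have e: "(\<lambda>b. (\<Sum>c=1..k (Suc m). \<Psi> c (S, b)) / real (k (Suc m))) = (\<lambda>b. (\<Sum>c=1..k (Suc m). \<Psi> c (S, 1)) / real (k (Suc m)))"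
        by (intro ext arg_cong2[where f="(/)"] sum.cong refl Pe)
      show ?thesis by (simp only: e) simp
    qed
    show ?thesis
      unfolding Suc lvl_Suc by (subst exp_pair[OF fins]) (simp only: h)
  qed
  finally show ?thesis .
qed
qed

lemma claim_base:
  assumes kok: "kok k" and M: "n + 2 \<le> M" and G: "lowdep n G"
  shows "EQ k M (\<lambda>w. G (idx k w n 1) (idx k w n 2) w) = EQ k M (\<lambda>w. avg (k n) G w)"
proof -
  define K where "K = k n"
  define kk where "kk = k (Suc n)"
  have K0: "real K > 0" using kok_pos[OF kok, of n] unfolding K_def by simp
  have kk0: "real kk > 0" using kok_pos[OF kok, of "Suc n"] unfolding kk_def by simp
  define B where "B w = (\<Sum>a=1..K. G (snd (w n)) a w) / real K" for w
  have i2: "idx k w n 2 = fst (rha_enum (k n) (fst (w (Suc n))) ! (snd (w (Suc n)) - 1))" for w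
    using idx_even[of 1 k w n] by (simp add: idx_1')
  have "EQ k M (\<lambda>w. G (idx k w n 1) (idx k w n 2) w) =
        EQ k M (\<lambda>w. G (snd (w n)) (fst (rha_enum (k n) (fst (w (Suc n))) ! (snd (w (Suc n)) - 1))) w)"
    by (simp add: i2 idx_1')
  also have "\<dots> = EQ k M (\<lambda>w. measure_pmf.expectation (rha_level_pmf k (Suc n))
      (\<lambda>x. G (snd (w n)) (fst (rha_enum (k n) (fst x) ! (snd x - 1))) w))"
    by (subst Q_resample[OF kok, of "Suc n"]) (use M lowdep_upd[OF G, of "Suc n"] in simp_all)
  also have "\<dots> = EQ k M B"
  proof -
    have "measure_pmf.expectation (rha_level_pmf k (Suc n))
      (\<lambda>x. G (snd (w n)) (fst (rha_enum (k n) (fst x) ! (snd x - 1))) w) = B w" for w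
    proof -
      have "measure_pmf.expectation (rha_level_pmf k (Suc n))
          (\<lambda>x. (\<lambda>S c. G (snd (w n)) (fst (rha_enum (k n) S ! (c - 1))) w) (fst x) (snd x)) =
          measure_pmf.expectation (pmf_of_set (Ssets (k n) (k (Suc n))))
            (\<lambda>S. (\<Sum>c=1..k (Suc n). G (snd (w n)) (fst (rha_enum (k n) S ! (c - 1))) w) / real (k (Suc n)))"
        by (rule exp_lvl_pair[OF kok])
      also have "\<dots> = (\<Sum>a=1..k n. \<Sum>b=1..k n. G (snd (w n)) a w) / (real (k n) * real (k n))"
        by (rule comb1_exp[where G="\<lambda>a b. G (snd (w n)) a w"]) (use kok_pos[OF kok] kok_sq[OF kok] in auto)
      also have "\<dots> = B w"
        unfolding B_def K_def[symmetric] using K0 by (simp add: sum_distrib_left[symmetric])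
      finally show ?thesis by simp
    qed
    then show ?thesis by simp
  qed
  also have "\<dots> = EQ k M (\<lambda>w. measure_pmf.expectation (rha_level_pmf k n) (\<lambda>x. B (w(n := x))))"
    by (rule Q_resample[OF kok]) (use M in simp)
  also have "\<dots> = EQ k M (\<lambda>w. (\<Sum>c=1..K. \<Sum>b=1..K. measure_pmf.expectation (rha_level_pmf k n) (\<lambda>x. G c b (w(n := x)))) / (real K * real K))"
  proof -
    have "measure_pmf.expectation (rha_level_pmf k n) (\<lambda>x. B (w(n := x))) =
          (\<Sum>c=1..K. \<Sum>b=1..K. measure_pmf.expectation (rha_level_pmf k n) (\<lambda>x. G c b (w(n := x)))) / (real K * real K)" for w
    proof -
      define \<Psi> where "\<Psi> c x = (\<Sum>a=1..K. G c a (w(n := x))) / real K" for c x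
      have P: "\<Psi> c x = \<Psi> c (fst x, c')" for c x c'
        unfolding \<Psi>_def using lowdep_upd_snd[OF G] by simp
      have "measure_pmf.expectation (rha_level_pmf k n) (\<lambda>x. B (w(n := x))) =
            measure_pmf.expectation (rha_level_pmf k n) (\<lambda>x. \<Psi> (snd x) x)"
        unfolding B_def \<Psi>_def by simp
      also have "\<dots> = measure_pmf.expectation (rha_level_pmf k n) (\<lambda>x. (\<Sum>c=1..k n. \<Psi> c x) / real (k n))"
        by (rule split_level[OF kok P])
      also have "\<dots> = measure_pmf.expectation (rha_level_pmf k n) (\<lambda>x. (\<Sum>c=1..K. \<Sum>b=1..K. G c b (w(n := x))) / (real K * real K))"
        unfolding \<Psi>_def K_def[symmetric] by (simp add: sum_divide_distrib[symmetric] divide_divide_eq_left mult.commute)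
      also have "\<dots> = (\<Sum>c=1..K. \<Sum>b=1..K. measure_pmf.expectation (rha_level_pmf k n) (\<lambda>x. G c b (w(n := x)))) / (real K * real K)"
        by (simp add: exp_sum[OF lvl_fin[OF kok]])
      finally show ?thesis .
    qed
    then show ?thesis by simp
  qed
  also have "\<dots> = (\<Sum>c=1..K. \<Sum>b=1..K. EQ k M (\<lambda>w. measure_pmf.expectation (rha_level_pmf k n) (\<lambda>x. G c b (w(n := x))))) / (real K * real K)"
    by (simp add: exp_sum[OF Q_fin[OF kok]])
  also have "\<dots> = (\<Sum>c=1..K. \<Sum>b=1..K. EQ k M (G c b)) / (real K * real K)"
    using Q_resample[OF kok, of n M] M by simp
  also have "\<dots> = EQ k M (\<lambda>w. avg (k n) G w)"
    unfolding avg_def K_def by (simp add: exp_sum[OF Q_fin[OF kok]])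
  finally show ?thesis .
qed

lemma claim:
  assumes kok: "kok k"
  shows "1 \<le> p \<Longrightarrow> n + p + 1 \<le> M \<Longrightarrow> lowdep n G \<Longrightarrow>
    EQ k M (\<lambda>w. G (idx k w n p) (idx k w n (p+1)) w) = EQ k M (\<lambda>w. avg (k n) G w)"
proof (induction p arbitrary: n G rule: less_induct)
  case (less p)
  show ?case
  proof (cases "p = 1")
    case True
    moreover have "(2::nat) = 1 + 1" by simp
    ultimately show ?thesis using claim_base[OF kok, of n M G] less.prems by (simp only:)
  next
    case False
    define q where "q = p div 2"
    have q: "1 \<le> q" "q < p" using False less.prems unfolding q_def by auto
    have IH: "\<And>H. lowdep (Suc n) H \<Longrightarrow>
       EQ k M (\<lambda>w. H (idx k w (Suc n) q) (idx k w (Suc n) (q+1)) w) = EQ k M (\<lambda>w. avg (k (Suc n)) H w)"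
      using less.IH[OF q(2) q(1)] less.prems q by simp
    show ?thesis
    proof (cases "even p")
      case True
      then have p: "p = 2*q" unfolding q_def by simp
      show ?thesis unfolding p using claim_even_step[OF kok q(1) _ less.prems(3) IH] less.prems p by simp
    next
      case False
      then have p: "p = 2*q+1" unfolding q_def by simp
      have "p + 1 = 2*(q+1)" using p by simp
      then show ?thesis unfolding p using claim_odd_step[OF kok q(1) _ less.prems(3) IH] less.prems p by simp
    qed
  qed
qed



lemma PiM_pmf:
  assumes fin: "finite J"
  shows "distr (measure_pmf (Pi_pmf J d p)) (PiM J (\<lambda>i. measure_pmf (p i))) (\<lambda>f. restrict f J)
         = PiM J (\<lambda>i. measure_pmf (p i))"
proof (rule product_sigma_finite.PiM_eqI)
  interpret product_prob_space "\<lambda>i. measure_pmf (p i)"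
    by (intro product_prob_spaceI measure_pmf.prob_space_axioms)
  show "product_sigma_finite (\<lambda>i. measure_pmf (p i))" by unfold_locales
  show "finite J" by fact
  show "sets (distr (measure_pmf (Pi_pmf J d p)) (PiM J (\<lambda>i. measure_pmf (p i))) (\<lambda>f. restrict f J)) =
        sets (PiM J (\<lambda>i. measure_pmf (p i)))" by simp
  fix A assume A: "\<And>i. i \<in> J \<Longrightarrow> A i \<in> sets (measure_pmf (p i))"
  have "Pi\<^sub>E J A \<in> sets (PiM J (\<lambda>i. measure_pmf (p i)))"
    using A by (intro sets_PiM_I_finite fin) auto
  hence "emeasure (distr (measure_pmf (Pi_pmf J d p)) (PiM J (\<lambda>i. measure_pmf (p i))) (\<lambda>f. restrict f J)) (Pi\<^sub>E J A) =
         emeasure (measure_pmf (Pi_pmf J d p)) ((\<lambda>x. restrict x J) -` Pi\<^sub>E J A)"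
    by (subst emeasure_distr) (auto simp: space_PiM)
  also have "\<dots> = emeasure (measure_pmf (Pi_pmf J d p)) (PiE_dflt J d A)"
    by (intro emeasure_eq_AE AE_pmfI) (auto simp: PiE_dflt_def set_Pi_pmf fin)
  also have "\<dots> = (\<Prod>i\<in>J. emeasure (measure_pmf (p i)) (A i))"
    by (simp add: measure_pmf.emeasure_eq_measure measure_Pi_pmf_PiE_dflt fin prod_ennreal)
  finally show "emeasure (distr (measure_pmf (Pi_pmf J d p)) (PiM J (\<lambda>i. measure_pmf (p i))) (\<lambda>f. restrict f J)) (Pi\<^sub>E J A) =
         (\<Prod>i\<in>J. emeasure (measure_pmf (p i)) (A i))" .
qed

lemma bridge:
  fixes F :: "(nat \<Rightarrow> (nat \<times> nat) set \<times> nat) \<Rightarrow> real"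
  assumes meas: "F \<in> borel_measurable (RHA_P k)"
    and dep: "\<And>w w'. (\<forall>i\<le>M. w i = w' i) \<Longrightarrow> F w = F w'"
  shows "integral\<^sup>L (RHA_P k) F = EQ k M F"
proof -
  let ?Mi = "\<lambda>i. measure_pmf (rha_level_pmf k i)"
  let ?J = "{..M}"
  interpret PP: product_prob_space ?Mi "UNIV :: nat set"
    by (intro product_prob_spaceI measure_pmf.prob_space_axioms)
  define ext where "ext g = (\<lambda>i. if i \<in> ?J then g i else ({}, 0))" for g :: "nat \<Rightarrow> (nat \<times> nat) set \<times> nat"
  have ext_meas: "ext \<in> measurable (PiM ?J ?Mi) (PiM UNIV ?Mi)"
  proof -
    have "(\<lambda>x. \<lambda>i\<in>UNIV. (if i \<in> ?J then x i else ({}, 0))) \<in> measurable (PiM ?J ?Mi) (PiM UNIV ?Mi)"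
    proof (rule measurable_restrict)
      fix i :: nat
      show "(\<lambda>x. if i \<in> ?J then x i else ({}, 0)) \<in> measurable (PiM ?J ?Mi) (?Mi i)"
        by (cases "i \<in> ?J") (auto intro: measurable_component_singleton)
    qed
    then show ?thesis unfolding ext_def restrict_UNIV by simp
  qed
  have RP: "RHA_P k = PiM UNIV ?Mi" by (simp add: RHA_P_def)
  have Fe: "F w = F (ext (restrict w ?J))" for w
    by (rule dep) (simp add: ext_def)
  have meas2: "(\<lambda>g. F (ext g)) \<in> borel_measurable (PiM ?J ?Mi)"
    using measurable_comp[OF ext_meas meas[unfolded RP]] by (simp add: comp_def)
  have "integral\<^sup>L (RHA_P k) F = integral\<^sup>L (PiM UNIV ?Mi) (\<lambda>w. F (ext (restrict w ?J)))"
    unfolding RP by (intro Bochner_Integration.integral_cong refl Fe)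
  also have "\<dots> = integral\<^sup>L (distr (PiM UNIV ?Mi) (PiM ?J ?Mi) (\<lambda>w. restrict w ?J)) (\<lambda>g. F (ext g))"
    by (rule integral_distr[symmetric]) (rule measurable_restrict_subset, simp, rule meas2)
  also have "distr (PiM UNIV ?Mi) (PiM ?J ?Mi) (\<lambda>w. restrict w ?J) = PiM ?J ?Mi"
    by (rule PP.distr_PiM_restrict_finite) auto
  also have "PiM ?J ?Mi = distr (measure_pmf (Q k M)) (PiM ?J ?Mi) (\<lambda>f. restrict f ?J)"
    unfolding Q_def by (rule PiM_pmf[symmetric]) simp
  also have "integral\<^sup>L \<dots> (\<lambda>g. F (ext g)) = EQ k M (\<lambda>f. F (ext (restrict f ?J)))"
    by (rule integral_distr) (auto simp: space_PiM meas2)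
  also have "\<dots> = EQ k M F"
    by (intro Bochner_Integration.integral_cong refl Fe[symmetric])
  finally show ?thesis .
qed



lemma meas_fun_count:
  fixes h :: "'a \<Rightarrow> 'b"
  shows "h \<in> count_space UNIV \<rightarrow>\<^sub>M count_space UNIV"
  by simp

lemma meas2:
  fixes f :: "'x \<Rightarrow> 'a::countable" and g :: "'x \<Rightarrow> 'b::countable"
  assumes "f \<in> M \<rightarrow>\<^sub>M count_space UNIV" "g \<in> M \<rightarrow>\<^sub>M count_space UNIV"
  shows "(\<lambda>x. h (f x) (g x)) \<in> M \<rightarrow>\<^sub>M count_space UNIV"
proof -
  have "(\<lambda>x. (\<lambda>i x. h i (g x)) (f x) x) \<in> M \<rightarrow>\<^sub>M count_space UNIV"
  proof (rule measurable_compose_countable[OF _ assms(1)])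
    fix i show "(\<lambda>x. h i (g x)) \<in> M \<rightarrow>\<^sub>M count_space UNIV"
      using measurable_comp[OF assms(2) meas_fun_count[of "h i"]] by (simp add: comp_def)
  qed
  then show ?thesis by simp
qed

lemma meas1:
  fixes f :: "'x \<Rightarrow> 'a::countable"
  assumes "f \<in> M \<rightarrow>\<^sub>M count_space UNIV"
  shows "(\<lambda>x. h (f x)) \<in> M \<rightarrow>\<^sub>M count_space UNIV"
  using measurable_comp[OF assms meas_fun_count[of h]] by (simp add: comp_def)

lemma meas1_borel:
  fixes f :: "'x \<Rightarrow> 'a::countable" and h :: "'a \<Rightarrow> real"
  assumes "f \<in> M \<rightarrow>\<^sub>M count_space UNIV"
  shows "(\<lambda>x. h (f x)) \<in> borel_measurable M"
proof -
  have "h \<in> count_space UNIV \<rightarrow>\<^sub>M borel" by simp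
  from measurable_comp[OF assms this] show ?thesis by (simp add: comp_def)
qed

lemma meas_coord:
  "(\<lambda>w. h (w i)) \<in> RHA_P k \<rightarrow>\<^sub>M count_space UNIV"
proof -
  have c: "(\<lambda>w. w i) \<in> RHA_P k \<rightarrow>\<^sub>M measure_pmf (rha_level_pmf k i)"
    unfolding RHA_P_def by (rule measurable_component_singleton) simp
  have "h \<in> measure_pmf (rha_level_pmf k i) \<rightarrow>\<^sub>M count_space UNIV" by simp
  from measurable_comp[OF c this] show ?thesis by (simp add: comp_def)
qed

lemma meas_Y: "(\<lambda>w. rha_Y k w n j) \<in> RHA_P k \<rightarrow>\<^sub>M count_space UNIV"
proof (induction n arbitrary: j)
  case 0 then show ?case by simp
next
  case (Suc n)
  have e: "(\<lambda>w. rha_enum (k n) (fst (w (Suc n))) ! (j - 1)) \<in> RHA_P k \<rightarrow>\<^sub>M count_space UNIV"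
    by (rule meas_coord)
  have "(\<lambda>w. (\<lambda>p w. rha_Y k w n (fst p) @ rha_Y k w n (snd p)) (rha_enum (k n) (fst (w (Suc n))) ! (j - 1)) w)
     \<in> RHA_P k \<rightarrow>\<^sub>M count_space UNIV"
  proof (rule measurable_compose_countable[OF _ e])
    fix p :: "nat \<times> nat"
    show "(\<lambda>w. rha_Y k w n (fst p) @ rha_Y k w n (snd p)) \<in> RHA_P k \<rightarrow>\<^sub>M count_space UNIV"
      by (rule meas2[OF Suc.IH Suc.IH])
  qed
  then show ?case by (simp add: Let_def)
qed

definition stepf :: "bool \<Rightarrow> (nat \<times> nat) list \<Rightarrow> nat \<Rightarrow> nat" where
  "stepf b l c = (if b then fst (l ! (c-1)) else snd (l ! (c-1)))"

lemma idx_gt1: "\<not> p \<le> 1 \<Longrightarrow> idx k w n p = stepf (even p) (rha_enum (k n) (fst (w (Suc n)))) (idx k w (Suc n) (p div 2))"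
  by (subst idx.simps) (simp add: Let_def stepf_def)

lemma idx_le1: "p \<le> 1 \<Longrightarrow> idx k w n p = snd (w n)"
  by (subst idx.simps) simp

lemma meas_idx: "(\<lambda>w. idx k w n p) \<in> RHA_P k \<rightarrow>\<^sub>M count_space UNIV"
proof (induction p arbitrary: n rule: less_induct)
  case (less p)
  show ?case
  proof (cases "p \<le> 1")
    case True
    then have "(\<lambda>w. idx k w n p) = (\<lambda>w. snd (w n))" using idx_le1 by simp
    then show ?thesis using meas_coord[of snd n k] by simp
  next
    case False
    then have eq: "(\<lambda>w. idx k w n p) = (\<lambda>w. stepf (even p) (rha_enum (k n) (fst (w (Suc n)))) (idx k w (Suc n) (p div 2)))"
      using idx_gt1 by simp
    have "p div 2 < p" using False by simp
    then show ?thesis unfolding eq by (rule meas2[OF meas_coord less.IH])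
  qed
qed



lemma Y_dep: "(\<forall>i. 1 \<le> i \<and> i \<le> n \<longrightarrow> fst (w i) = fst (w' i)) \<Longrightarrow> rha_Y k w n a = rha_Y k w' n a"
proof (induction n arbitrary: a)
  case 0 then show ?case by simp
next
  case (Suc n)
  have "fst (w (Suc n)) = fst (w' (Suc n))" using Suc.prems by simp
  moreover have "\<And>b. rha_Y k w n b = rha_Y k w' n b" using Suc.prems by (intro Suc.IH) auto
  ultimately show ?case by (simp add: Let_def)
qed

lemma idx_dep: "(\<forall>i\<le>n+p. w i = w' i) \<Longrightarrow> idx k w n p = idx k w' n p"
proof (induction p arbitrary: n rule: less_induct)
  case (less p)
  show ?case
  proof (cases "p \<le> 1")
    case True then show ?thesis using less.prems by (simp add: idx_le1)
  next
    case False
    have "p div 2 < p" using False by simp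
    moreover have "\<forall>i\<le>Suc n + p div 2. w i = w' i" using less.prems False by auto
    ultimately have "idx k w (Suc n) (p div 2) = idx k w' (Suc n) (p div 2)" by (rule less.IH)
    moreover have "w (Suc n) = w' (Suc n)" using less.prems False by auto
    ultimately show ?thesis using False by (simp add: idx_gt1)
  qed
qed

definition pY :: "(nat \<Rightarrow> nat) \<Rightarrow> nat \<Rightarrow> nat \<Rightarrow> (nat list \<Rightarrow> nat list \<Rightarrow> real) \<Rightarrow> (nat \<Rightarrow> (nat \<times> nat) set \<times> nat) \<Rightarrow> real" where
  "pY k n p \<Phi> w = \<Phi> (rha_Y k w n (idx k w n p)) (rha_Y k w n (idx k w n (p+1)))"

definition aY :: "(nat \<Rightarrow> nat) \<Rightarrow> nat \<Rightarrow> (nat list \<Rightarrow> nat list \<Rightarrow> real) \<Rightarrow> (nat \<Rightarrow> (nat \<times> nat) set \<times> nat) \<Rightarrow> real" where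
  "aY k n \<Phi> w = avg (k n) (\<lambda>a b w. \<Phi> (rha_Y k w n a) (rha_Y k w n b)) w"

lemma meas_Yidx: "(\<lambda>w. rha_Y k w n (idx k w n p)) \<in> RHA_P k \<rightarrow>\<^sub>M count_space UNIV"
proof -
  have "(\<lambda>w. (\<lambda>c w. rha_Y k w n c) (idx k w n p) w) \<in> RHA_P k \<rightarrow>\<^sub>M count_space UNIV"
    by (rule measurable_compose_countable[OF meas_Y meas_idx])
  then show ?thesis by simp
qed

lemma meas_pY: "pY k n p \<Phi> \<in> borel_measurable (RHA_P k)"
proof -
  have "(\<lambda>w. Pair (rha_Y k w n (idx k w n p)) (rha_Y k w n (idx k w n (p+1)))) \<in> RHA_P k \<rightarrow>\<^sub>M count_space UNIV"
    by (rule meas2[OF meas_Yidx meas_Yidx])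
  from meas1_borel[OF this, of "\<lambda>z. \<Phi> (fst z) (snd z)"] show ?thesis unfolding pY_def by simp
qed

lemma meas_aY: "aY k n \<Phi> \<in> borel_measurable (RHA_P k)"
proof -
  have m: "(\<lambda>w. \<Phi> (rha_Y k w n a) (rha_Y k w n b)) \<in> borel_measurable (RHA_P k)" for a b
  proof -
    have "(\<lambda>w. Pair (rha_Y k w n a) (rha_Y k w n b)) \<in> RHA_P k \<rightarrow>\<^sub>M count_space UNIV"
      by (rule meas2[OF meas_Y meas_Y])
    from meas1_borel[OF this, of "\<lambda>z. \<Phi> (fst z) (snd z)"] show ?thesis by simp
  qed
  show ?thesis unfolding aY_def avg_def
    by (intro borel_measurable_divide borel_measurable_sum m) simp
qed

lemma pY_int:
  assumes "n + p + 1 \<le> M"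
  shows "integral\<^sup>L (RHA_P k) (pY k n p \<Phi>) = EQ k M (pY k n p \<Phi>)"
proof (rule bridge[OF meas_pY])
  fix w w' :: "nat \<Rightarrow> (nat \<times> nat) set \<times> nat" assume a: "\<forall>i\<le>M. w i = w' i"
  have "idx k w n p = idx k w' n p" "idx k w n (p+1) = idx k w' n (p+1)"
    using assms a by (intro idx_dep; auto)+
  moreover have "rha_Y k w n c = rha_Y k w' n c" for c using assms a by (intro Y_dep) auto
  ultimately show "pY k n p \<Phi> w = pY k n p \<Phi> w'" unfolding pY_def by simp
qed

lemma aY_int:
  assumes "n \<le> M"
  shows "integral\<^sup>L (RHA_P k) (aY k n \<Phi>) = EQ k M (aY k n \<Phi>)"
proof (rule bridge[OF meas_aY])
  fix w w' :: "nat \<Rightarrow> (nat \<times> nat) set \<times> nat" assume a: "\<forall>i\<le>M. w i = w' i"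
  have "rha_Y k w n c = rha_Y k w' n c" for c using assms a by (intro Y_dep) auto
  then show "aY k n \<Phi> w = aY k n \<Phi> w'" unfolding aY_def avg_def by simp
qed

lemma law:
  assumes kok: "kok k" and p: "1 \<le> p"
  shows "integral\<^sup>L (RHA_P k) (pY k n p \<Phi>) = integral\<^sup>L (RHA_P k) (aY k n \<Phi>)"
proof -
  have low: "lowdep n (\<lambda>a b w. \<Phi> (rha_Y k w n a) (rha_Y k w n b))"
    unfolding lowdep_def using Y_dep by metis
  have "integral\<^sup>L (RHA_P k) (pY k n p \<Phi>) = EQ k (n+p+1) (pY k n p \<Phi>)"
    by (rule pY_int) simp
  also have "\<dots> = EQ k (n+p+1) (aY k n \<Phi>)"
    unfolding pY_def aY_def using claim[OF kok p _ low, of "n+p+1"] by simp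
  also have "\<dots> = integral\<^sup>L (RHA_P k) (aY k n \<Phi>)"
    by (rule aY_int[symmetric]) simp
  finally show ?thesis .
qed



definition vld :: "(nat \<Rightarrow> nat) \<Rightarrow> (nat \<Rightarrow> (nat \<times> nat) set \<times> nat) \<Rightarrow> nat \<Rightarrow> bool" where
  "vld k w M = (\<forall>i\<le>M. w i \<in> set_pmf (rha_level_pmf k i))"

lemma vld_Q: "w \<in> set_pmf (Q k M) \<Longrightarrow> vld k w M"
  unfolding Q_def vld_def by (auto simp: set_Pi_pmf PiE_dflt_def)

lemma vld_mono: "vld k w M \<Longrightarrow> M' \<le> M \<Longrightarrow> vld k w M'"
  unfolding vld_def by auto

lemma vld_snd:
  assumes kok: "kok k" and v: "vld k w M" and i: "i \<le> M"
  shows "snd (w i) \<in> {1..k i}"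
proof -
  have x: "w i \<in> set_pmf (rha_level_pmf k i)" using v i unfolding vld_def by auto
  show ?thesis
  proof (cases i)
    case 0 then show ?thesis using x ne_ivl[OF kok, of 0] by (auto simp: lvl_0)
  next
    case (Suc n)
    have "Ssets (k n) (k (Suc n)) \<noteq> {}" using kok_sq[OF kok] Ssets_ne by blast
    then show ?thesis using x Suc ne_ivl[OF kok, of "Suc n"] by (auto simp: lvl_Suc finite_Ssets)
  qed
qed

lemma vld_fst:
  assumes kok: "kok k" and v: "vld k w M" and i: "Suc i \<le> M"
  shows "fst (w (Suc i)) \<in> Ssets (k i) (k (Suc i))"
proof -
  have x: "w (Suc i) \<in> set_pmf (rha_level_pmf k (Suc i))" using v i unfolding vld_def by auto
  have "Ssets (k i) (k (Suc i)) \<noteq> {}" using kok_sq[OF kok] Ssets_ne by blast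
  then show ?thesis using x ne_ivl[OF kok, of "Suc i"] by (auto simp: lvl_Suc finite_Ssets)
qed

lemma enum_mem:
  assumes "S \<in> Ssets K kk" "c \<in> {1..kk}"
  shows "fst (rha_enum K S ! (c-1)) \<in> {1..K}" "snd (rha_enum K S ! (c-1)) \<in> {1..K}"
proof -
  have S: "S \<subseteq> {1..K}\<times>{1..K}" "card S = kk" using assms(1) by (auto simp: Ssets_def)
  note P = rha_enum_props[OF S(1)]
  have "c - 1 < length (rha_enum K S)" using assms(2) P S by auto
  then have "rha_enum K S ! (c-1) \<in> S" using P by (metis nth_mem)
  then show "fst (rha_enum K S ! (c-1)) \<in> {1..K}" "snd (rha_enum K S ! (c-1)) \<in> {1..K}" using S by auto
qed

lemma Y_valid:
  assumes kok: "kok k" and v: "vld k w M"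
  shows "n \<le> M \<Longrightarrow> a \<in> {1..k n} \<Longrightarrow> set (rha_Y k w n a) \<subseteq> {1..k 0}"
proof (induction n arbitrary: a)
  case 0 then show ?case by simp
next
  case (Suc n)
  have S: "fst (w (Suc n)) \<in> Ssets (k n) (k (Suc n))" using vld_fst[OF kok v] Suc.prems by simp
  note E = enum_mem[OF S Suc.prems(2)]
  show ?case using Suc.IH[OF _ E(1)] Suc.IH[OF _ E(2)] Suc.prems by (simp add: Let_def)
qed

lemma idx_valid:
  assumes kok: "kok k" and v: "vld k w M"
  shows "n + p \<le> M \<Longrightarrow> idx k w n p \<in> {1..k n}"
proof (induction p arbitrary: n rule: less_induct)
  case (less p)
  show ?case
  proof (cases "p \<le> 1")
    case True then show ?thesis using vld_snd[OF kok v, of n] less.prems by (simp add: idx_le1)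
  next
    case False
    have "p div 2 < p" using False by simp
    moreover have "Suc n + p div 2 \<le> M" using less.prems False by linarith
    ultimately have c: "idx k w (Suc n) (p div 2) \<in> {1..k (Suc n)}" by (rule less.IH)
    have S: "fst (w (Suc n)) \<in> Ssets (k n) (k (Suc n))" using vld_fst[OF kok v] less.prems False by simp
    note E = enum_mem[OF S c]
    show ?thesis using False E by (simp add: idx_gt1 stepf_def)
  qed
qed

lemma EQ_mono:
  assumes kok: "kok k" and le: "\<And>w. vld k w M \<Longrightarrow> F1 w \<le> F2 w"
  shows "EQ k M F1 \<le> EQ k M F2"
proof (rule integral_mono_AE)
  show "integrable (measure_pmf (Q k M)) F1" "integrable (measure_pmf (Q k M)) F2"
    by (rule integrable_measure_pmf_finite[OF Q_fin[OF kok]])+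
  show "AE x in measure_pmf (Q k M). F1 x \<le> F2 x"
    by (rule AE_pmfI) (use le vld_Q in blast)
qed



lemma window_eq:
  assumes i: "2^n \<le> i"
  shows "rha_Xseg k w i (i + 2^n - 1) =
    take (2^n) (drop (i mod 2^n) (rha_Y k w n (idx k w n (i div 2^n)) @ rha_Y k w n (idx k w n (i div 2^n + 1))))"
    (is "_ = take ?m (drop ?r ?Z)")
proof -
  let ?p = "i div ?m"
  have m1: "1 \<le> ?m" by simp
  have p1: "1 \<le> ?p" using i by (simp add: div_le_mono[of "2^n" i "2^n", simplified])
  have r: "?r < ?m" by simp
  have ip: "i = ?p * ?m + ?r" by (rule div_mult_mod_eq[symmetric])
  have lenZ: "length ?Z = 2 * ?m" by (simp add: len_Y)
  have "rha_Xseg k w i (i + ?m - 1) = map (wd k w) [i..<i + ?m]"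
    using m1 i by (subst Xseg_map) (use le_trans[OF m1 i] in auto)
  also have "\<dots> = take ?m (drop ?r ?Z)"
  proof (rule nth_equalityI)
    show "length (map (wd k w) [i..<i + ?m]) = length (take ?m (drop ?r ?Z))"
      using r by (simp only: length_take length_drop lenZ length_map length_upt)
    fix s assume "s < length (map (wd k w) [i..<i + ?m])"
    then have s: "s < ?m" by simp
    have "map (wd k w) [i..<i + ?m] ! s = wd k w (?p * ?m + (?r + s))"
      using s ip by (simp add: algebra_simps)
    also have "\<dots> = ?Z ! (?r + s)"
    proof (cases "?r + s < ?m")
      case True
      then show ?thesis using wd_idx[OF p1 True] by (simp add: nth_append len_Y)
    next
      case False
      have e: "?p * ?m + (?r + s) = (?p + 1) * ?m + (?r + s - ?m)" using False by simp
      have "?r + s - ?m < ?m" using r s by linarith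
      then show ?thesis unfolding e using wd_idx[of "?p + 1" "?r + s - ?m" n k w] False
        by (simp add: nth_append len_Y)
    qed
    also have "\<dots> = take ?m (drop ?r ?Z) ! s" using s lenZ r by (simp only: nth_take nth_drop)
    finally show "map (wd k w) [i..<i + ?m] ! s = take ?m (drop ?r ?Z) ! s" .
  qed
  finally show ?thesis .
qed

lemma sublist_take_drop: "sublist (take m (drop r Z)) Z"
proof -
  have "Z = take r Z @ (take m (drop r Z) @ drop m (drop r Z))" by (simp only: append_take_drop_id)
  then show ?thesis by (metis sublist_appendI)
qed

lemma sublist_map_upt:
  assumes "a \<le> b" "b \<le> c" "c \<le> d"
  shows "sublist (map f [b..<c]) (map f [a..<d])"
proof -
  have s: "[x..<z] = [x..<y] @ [y..<z]" if "x \<le> y" "y \<le> z" for x y z :: nat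
    using upt_add_eq_append[OF that(1), of "z - y"] that by simp
  have "[a..<d] = [a..<b] @ [b..<c] @ [c..<d]"
    using assms s[of a b d] s[of b c d] by simp
  then have "map f [a..<d] = map f [a..<b] @ map f [b..<c] @ map f [c..<d]" by simp
  then show ?thesis by (metis sublist_appendI)
qed

lemma block_in_window:
  assumes i: "1 \<le> i" and n: "1 \<le> n"
  defines "q \<equiv> (i + 2^(n-1) - 1) div 2^(n-1)"
  shows "1 \<le> q" "q \<le> i" "sublist (rha_Xblock k w (n-1) q) (rha_Xseg k w i (i + 2^n - 1))"
proof -
  define h where "h = (2::nat)^(n-1)"
  have h1: "1 \<le> h" unfolding h_def by simp
  have m: "(2::nat)^n = 2 * h" unfolding h_def using n by (cases n) auto
  have qd: "q = (i + h - 1) div h" unfolding q_def h_def by simp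
  define rr where "rr = (i + h - 1) mod h"
  have rr: "i + h - 1 = q * h + rr" "rr < h"
    using h1 unfolding qd rr_def by simp_all
  have lo: "i \<le> q * h" using rr h1 by linarith
  have hi: "q * h + h \<le> i + 2 * h" using rr h1 by linarith
  show "1 \<le> q" using lo i h1 by (cases q) auto
  show "q \<le> i"
  proof -
    have "q * h \<le> i + h - 1" using rr by linarith
    also have "\<dots> \<le> i * h"
    proof -
      obtain i' where "i = Suc i'" using i by (cases i) auto
      moreover obtain h' where "h = Suc h'" using h1 by (cases h) auto
      ultimately show ?thesis by simp
    qed
    finally show ?thesis using h1 by simp
  qed
  have "1 \<le> q * h" using lo i by linarith
  then have B: "rha_Xblock k w (n-1) q = map (wd k w) [q*h..<q*h + h]"
    unfolding rha_Xblock_def h_def[symmetric] by (subst Xseg_map) (auto simp: algebra_simps)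
  have W: "rha_Xseg k w i (i + 2^n - 1) = map (wd k w) [i..<i + 2*h]"
    using i h1 m by (subst Xseg_map) auto
  show "sublist (rha_Xblock k w (n-1) q) (rha_Xseg k w i (i + 2^n - 1))"
    unfolding B W by (rule sublist_map_upt) (use lo hi in auto)
qed



lemma cesaro_periodic:
  fixes f :: "nat \<Rightarrow> real"
  assumes m: "1 \<le> m" and per: "\<And>i. m \<le> i \<Longrightarrow> f (i + m) = f i"
  shows "(\<lambda>N. (\<Sum>i=1..N. f i) / real N) \<longlonglongrightarrow> (\<Sum>i\<in>{m..<2*m}. f i) / real m"
proof -
  define A where "A = (\<Sum>i\<in>{m..<2*m}. f i)"
  have T: "(\<Sum>i\<in>{N..<N+m}. f i) = A" if "m \<le> N" for N
    using that
  proof (induction N rule: dec_induct)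
    case base then show ?case by (simp add: A_def mult_2)
  next
    case (step N)
    have "(\<Sum>i\<in>{Suc N..<Suc N+m}. f i) = (\<Sum>i\<in>{N..<N+m}. f i) - f N + f (N + m)"
    proof -
      have "(\<Sum>i\<in>{N..<N+m}. f i) = f N + (\<Sum>i\<in>{Suc N..<N+m}. f i)"
        using assms(1) sum.atLeast_Suc_lessThan[of N "N+m" f] by simp
      moreover have "(\<Sum>i\<in>{Suc N..<Suc N+m}. f i) = (\<Sum>i\<in>{Suc N..<N+m}. f i) + f (N + m)"
        using assms(1) by simp
      ultimately show ?thesis by simp
    qed
    also have "\<dots> = A" using step per[OF step(1)] by simp
    finally show ?case .
  qed
  define g where "g N = (\<Sum>i=1..N. f i) - real N * A / real m" for N
  have gper: "g (N + m) = g N" if "m \<le> N + 1" for N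
  proof -
    have "(\<Sum>i=1..N+m. f i) = (\<Sum>i=1..N. f i) + (\<Sum>i\<in>{N+1..<N+1+m}. f i)"
    proof -
      have "{1..N+m} = {1..N} \<union> {N+1..<N+1+m}" by auto
      moreover have "{1..N} \<inter> {N+1..<N+1+m} = {}" by auto
      ultimately show ?thesis by (simp add: sum.union_disjoint)
    qed
    also have "(\<Sum>i\<in>{N+1..<N+1+m}. f i) = A" using T[OF that] by simp
    finally show ?thesis unfolding g_def using m by (simp add: field_simps)
  qed
  define B where "B = Max ((\<lambda>j. \<bar>g j\<bar>) ` {..2*m})"
  have gB: "\<bar>g N\<bar> \<le> B" for N
  proof (induction N rule: less_induct)
    case (less N)
    show ?case
    proof (cases "N \<le> 2*m")
      case True then show ?thesis unfolding B_def by (intro Max_ge) auto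
    next
      case False
      then have "g N = g (N - m)" using gper[of "N - m"] m by simp
      moreover have "N - m < N" using False m by simp
      ultimately show ?thesis using less.IH by simp
    qed
  qed
  have lim0: "(\<lambda>N. (\<Sum>i=1..N. f i) / real N - A / real m) \<longlonglongrightarrow> 0"
  proof (rule Lim_null_comparison)
    show "\<forall>\<^sub>F N in sequentially. norm ((\<Sum>i=1..N. f i) / real N - A / real m) \<le> B * inverse (real N)"
    proof (rule eventually_sequentiallyI[of 1])
      fix N :: nat assume N: "1 \<le> N"
      have "(\<Sum>i=1..N. f i) / real N - A / real m = g N / real N"
        unfolding g_def using N m by (simp add: field_simps)
      then show "norm ((\<Sum>i=1..N. f i) / real N - A / real m) \<le> B * inverse (real N)"
      proof -
        have "\<bar>g N * inverse (real N)\<bar> = \<bar>g N\<bar> * inverse (real N)" using N by (simp add: abs_mult)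
        also have "\<dots> \<le> B * inverse (real N)" using gB[of N] N by (intro mult_right_mono) auto
        finally show ?thesis using \<open>(\<Sum>i=1..N. f i) / real N - A / real m = g N / real N\<close> by (simp add: divide_inverse)
      qed
    qed
    show "(\<lambda>N. B * inverse (real N)) \<longlonglongrightarrow> 0"
      using tendsto_mult_right_zero[OF lim_inverse_n, of B] by simp
  qed
  then have "(\<lambda>N. (\<Sum>i=1..N. f i) / real N - A / real m + A / real m) \<longlonglongrightarrow> 0 + A / real m"
    by (intro tendsto_add tendsto_const)
  then show ?thesis unfolding A_def by simp
qed



lemma Y_Suc_idx:
  assumes "1 \<le> j"
  shows "rha_Y k w (Suc n) (idx k w (Suc n) j) = rha_Y k w n (idx k w n (2*j)) @ rha_Y k w n (idx k w n (2*j+1))"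
  using idx_even[OF assms, of k w n] idx_odd[OF assms, of k w n] by (simp add: Let_def)

lemma space_RHA: "space (RHA_P k) = UNIV"
  by (simp add: RHA_P_def space_PiM)

lemma EQ_cong:
  assumes kok: "kok k" and eq: "\<And>w. vld k w M \<Longrightarrow> F1 w = F2 w"
  shows "EQ k M F1 = EQ k M F2"
proof (rule antisym)
  show "EQ k M F1 \<le> EQ k M F2" by (rule EQ_mono[OF kok]) (simp add: eq)
  show "EQ k M F2 \<le> EQ k M F1" by (rule EQ_mono[OF kok]) (simp add: eq)
qed

lemma avg_mono:
  assumes "\<And>a b. a \<in> {1..K} \<Longrightarrow> b \<in> {1..K} \<Longrightarrow> G1 a b w \<le> G2 a b w"
  shows "avg K G1 w \<le> avg K G2 w"
  unfolding avg_def by (intro divide_right_mono sum_mono) (use assms in auto)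

lemma pY_Xblock: "1 \<le> j \<Longrightarrow> pY k n j (\<lambda>u v. \<phi> u) w = \<phi> (rha_Xblock k w n j)"
  unfolding pY_def by (simp add: Xblock_eq)

lemma pY_window:
  assumes "2^n \<le> i"
  shows "pY k n (i div 2^n) (\<lambda>u v. \<psi> (take (2^n) (drop (i mod 2^n) (u @ v)))) w = \<psi> (rha_Xseg k w i (i + 2^n - 1))"
  unfolding pY_def window_eq[OF assms] by simp

lemma window_valid:
  assumes kok: "kok k" and v: "vld k w M" and i: "2^n \<le> i" and M: "n + i div 2^n + 1 \<le> M"
  shows "set (rha_Xseg k w i (i + 2^n - 1)) \<subseteq> {1..k 0}"
proof -
  let ?p = "i div 2^n"
  have a: "idx k w n ?p \<in> {1..k n}" "idx k w n (?p+1) \<in> {1..k n}"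
    using idx_valid[OF kok v] M by auto
  have "set (rha_Y k w n (idx k w n ?p)) \<subseteq> {1..k 0}" "set (rha_Y k w n (idx k w n (?p+1))) \<subseteq> {1..k 0}"
    using Y_valid[OF kok v _ a(1)] Y_valid[OF kok v _ a(2)] M by auto
  then have Z: "set (rha_Y k w n (idx k w n ?p) @ rha_Y k w n (idx k w n (?p+1))) \<subseteq> {1..k 0}"
    by (simp only: set_append Un_subset_iff)
  have T: "set (take (2^n) (drop (i mod 2^n) Z)) \<subseteq> set Z" for Z :: "nat list"
    using set_take_subset[of "2^n" "drop (i mod 2^n) Z"] set_drop_subset[of "i mod 2^n" Z] by (rule order_trans)
  show ?thesis unfolding window_eq[OF i] by (rule order_trans[OF T Z])
qed



lemma e_law:
  fixes \<psi> :: "nat list \<Rightarrow> real"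
  assumes kok: "kok k" and i: "2^n \<le> i"
  shows "integral\<^sup>L (RHA_P k) (\<lambda>w. \<psi> (rha_Xseg k w i (i + 2^n - 1))) =
         integral\<^sup>L (RHA_P k) (aY k n (\<lambda>u v. \<psi> (take (2^n) (drop (i mod 2^n) (u @ v)))))"
proof -
  have p1: "1 \<le> i div 2^n" using i by (simp add: div_le_mono[of "2^n" i "2^n", simplified])
  have "integral\<^sup>L (RHA_P k) (\<lambda>w. \<psi> (rha_Xseg k w i (i + 2^n - 1))) =
        integral\<^sup>L (RHA_P k) (pY k n (i div 2^n) (\<lambda>u v. \<psi> (take (2^n) (drop (i mod 2^n) (u @ v)))))"
    by (intro Bochner_Integration.integral_cong refl) (rule pY_window[OF i, symmetric])
  also have "\<dots> = integral\<^sup>L (RHA_P k) (aY k n (\<lambda>u v. \<psi> (take (2^n) (drop (i mod 2^n) (u @ v)))))"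
    by (rule law[OF kok p1])
  finally show ?thesis .
qed

lemma upper:
  fixes \<phi> :: "nat list \<Rightarrow> real"
  assumes kok: "kok k" and mono: "\<forall>u w. set w \<subseteq> {1..k 0} \<longrightarrow> sublist u w \<longrightarrow> \<phi> u \<le> \<phi> w"
    and i: "2^n \<le> i" and j: "1 \<le> j"
  shows "integral\<^sup>L (RHA_P k) (\<lambda>w. \<phi> (rha_Xseg k w i (i + 2^n - 1))) \<le>
         integral\<^sup>L (RHA_P k) (\<lambda>w. \<phi> (rha_Xblock k w (n+1) j))"
proof -
  have j2: "1 \<le> 2*j" using j by simp
  have "integral\<^sup>L (RHA_P k) (\<lambda>w. \<phi> (rha_Xblock k w (n+1) j)) = integral\<^sup>L (RHA_P k) (pY k n (2*j) (\<lambda>u v. \<phi> (u @ v)))"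
    unfolding pY_def using Xblock_eq[OF j] Y_Suc_idx[OF j] by simp
  also have "\<dots> = integral\<^sup>L (RHA_P k) (aY k n (\<lambda>u v. \<phi> (u @ v)))"
    by (rule law[OF kok j2])
  also have "\<dots> = EQ k n (aY k n (\<lambda>u v. \<phi> (u @ v)))" by (rule aY_int) simp
  finally have U: "integral\<^sup>L (RHA_P k) (\<lambda>w. \<phi> (rha_Xblock k w (n+1) j)) = EQ k n (aY k n (\<lambda>u v. \<phi> (u @ v)))" .
  have E: "integral\<^sup>L (RHA_P k) (\<lambda>w. \<phi> (rha_Xseg k w i (i + 2^n - 1))) =
        EQ k n (aY k n (\<lambda>u v. \<phi> (take (2^n) (drop (i mod 2^n) (u @ v)))))"
    unfolding e_law[OF kok i] by (rule aY_int) simp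
  have "EQ k n (aY k n (\<lambda>u v. \<phi> (take (2^n) (drop (i mod 2^n) (u @ v))))) \<le> EQ k n (aY k n (\<lambda>u v. \<phi> (u @ v)))"
  proof (rule EQ_mono[OF kok])
    fix w assume v: "vld k w n"
    show "aY k n (\<lambda>u v. \<phi> (take (2^n) (drop (i mod 2^n) (u @ v)))) w \<le> aY k n (\<lambda>u v. \<phi> (u @ v)) w"
      unfolding aY_def
    proof (rule avg_mono)
      fix a b assume a: "a \<in> {1..k n}" and b: "b \<in> {1..k n}"
      have "set (rha_Y k w n a @ rha_Y k w n b) \<subseteq> {1..k 0}"
        using Y_valid[OF kok v _ a] Y_valid[OF kok v _ b] by simp
      then show "\<phi> (take (2^n) (drop (i mod 2^n) (rha_Y k w n a @ rha_Y k w n b))) \<le> \<phi> (rha_Y k w n a @ rha_Y k w n b)"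
        using mono sublist_take_drop by blast
    qed
  qed
  then show ?thesis unfolding U E .
qed

lemma lower:
  fixes \<phi> :: "nat list \<Rightarrow> real"
  assumes kok: "kok k" and mono: "\<forall>u w. set w \<subseteq> {1..k 0} \<longrightarrow> sublist u w \<longrightarrow> \<phi> u \<le> \<phi> w"
    and i: "2^n \<le> i" and n: "1 \<le> n" and j: "1 \<le> j"
  shows "integral\<^sup>L (RHA_P k) (\<lambda>w. \<phi> (rha_Xblock k w (n-1) j)) \<le>
         integral\<^sup>L (RHA_P k) (\<lambda>w. \<phi> (rha_Xseg k w i (i + 2^n - 1)))"
proof -
  have i1: "1 \<le> i" using i by (meson le_trans one_le_numeral one_le_power)
  define q where "q = (i + 2^(n-1) - 1) div 2^(n-1)"
  note BW = block_in_window[OF i1 n, folded q_def]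
  define M where "M = n + i + 2"
  have p_le: "i div 2^n \<le> i" by simp
  have "integral\<^sup>L (RHA_P k) (\<lambda>w. \<phi> (rha_Xblock k w (n-1) j)) = integral\<^sup>L (RHA_P k) (pY k (n-1) j (\<lambda>u v. \<phi> u))"
    by (intro Bochner_Integration.integral_cong refl) (rule pY_Xblock[OF j, symmetric])
  also have "\<dots> = integral\<^sup>L (RHA_P k) (aY k (n-1) (\<lambda>u v. \<phi> u))" by (rule law[OF kok j])
  also have "\<dots> = integral\<^sup>L (RHA_P k) (pY k (n-1) q (\<lambda>u v. \<phi> u))" by (rule law[OF kok BW(1), symmetric])
  also have "\<dots> = EQ k M (pY k (n-1) q (\<lambda>u v. \<phi> u))" by (rule pY_int) (use BW(2) n in \<open>simp add: M_def\<close>)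
  also have "\<dots> \<le> EQ k M (pY k n (i div 2^n) (\<lambda>u v. \<phi> (take (2^n) (drop (i mod 2^n) (u @ v)))))"
  proof (rule EQ_mono[OF kok])
    fix w assume v: "vld k w M"
    have "set (rha_Xseg k w i (i + 2^n - 1)) \<subseteq> {1..k 0}"
      by (rule window_valid[OF kok v i]) (use p_le in \<open>simp add: M_def, linarith\<close>)
    then have "\<phi> (rha_Xblock k w (n-1) q) \<le> \<phi> (rha_Xseg k w i (i + 2^n - 1))"
      using mono BW(3) by blast
    then show "pY k (n-1) q (\<lambda>u v. \<phi> u) w \<le> pY k n (i div 2^n) (\<lambda>u v. \<phi> (take (2^n) (drop (i mod 2^n) (u @ v)))) w"
      unfolding pY_Xblock[OF BW(1)] pY_window[OF i] .
  qed
  also have "\<dots> = integral\<^sup>L (RHA_P k) (pY k n (i div 2^n) (\<lambda>u v. \<phi> (take (2^n) (drop (i mod 2^n) (u @ v)))))"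
    by (rule pY_int[symmetric]) (use p_le in \<open>simp add: M_def, linarith\<close>)
  also have "\<dots> = integral\<^sup>L (RHA_P k) (\<lambda>w. \<phi> (rha_Xseg k w i (i + 2^n - 1)))"
    by (intro Bochner_Integration.integral_cong refl) (rule pY_window[OF i])
  finally show ?thesis .
qed



lemma Xseg_int:
  fixes \<psi> :: "nat list \<Rightarrow> real"
  assumes i: "2^n \<le> i" and M: "n + i div 2^n + 1 \<le> M"
  shows "integral\<^sup>L (RHA_P k) (\<lambda>w. \<psi> (rha_Xseg k w i (i + 2^n - 1))) = EQ k M (\<lambda>w. \<psi> (rha_Xseg k w i (i + 2^n - 1)))"
proof -
  let ?F = "pY k n (i div 2^n) (\<lambda>u v. \<psi> (take (2^n) (drop (i mod 2^n) (u @ v))))"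
  have e: "(\<lambda>w. \<psi> (rha_Xseg k w i (i + 2^n - 1))) = ?F"
    by (rule ext) (rule pY_window[OF i, symmetric])
  show ?thesis unfolding e by (rule pY_int[OF M])
qed

lemma len_window: "1 \<le> i \<Longrightarrow> length (rha_Xseg k w i (i + 2^n - 1)) = 2^n"
proof -
  assume i: "1 \<le> i"
  have "(1::nat) \<le> 2^n" by simp
  then show ?thesis using i by (subst Xseg_map) auto
qed

lemma prob_law:
  assumes kok: "kok k" and i: "2^n \<le> i" and x: "length x = 2^n"
  shows "measure (RHA_P k) {\<omega> \<in> space (RHA_P k). rha_Xseg k \<omega> i (i + length x - 1) = x} =
    integral\<^sup>L (RHA_P k) (aY k n (\<lambda>u v. (\<lambda>z. if z = x then 1 else 0) (take (2^n) (drop (i mod 2^n) (u @ v)))))"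
proof -
  let ?S = "{\<omega> \<in> space (RHA_P k). rha_Xseg k \<omega> i (i + length x - 1) = x}"
  have "measure (RHA_P k) ?S = integral\<^sup>L (RHA_P k) (indicator ?S)"
    by (simp add: Int_absorb2)
  also have "indicator ?S = (\<lambda>w. (\<lambda>z. if z = x then 1 else 0::real) (rha_Xseg k w i (i + 2^n - 1)))"
    by (rule ext) (simp add: x space_RHA indicator_def)
  also have "integral\<^sup>L (RHA_P k) \<dots> = integral\<^sup>L (RHA_P k) (aY k n (\<lambda>u v. (\<lambda>z. if z = x then 1 else 0) (take (2^n) (drop (i mod 2^n) (u @ v)))))"
    by (rule e_law[OF kok i])
  finally show ?thesis .
qed

lemma sum_law:
  fixes \<phi> :: "nat list \<Rightarrow> real"
  assumes kok: "kok k" and i: "2^n \<le> i"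
  shows "(\<Sum>x\<in>{x. length x = 2^n \<and> set x \<subseteq> {1..k 0}}.
            measure (RHA_P k) {\<omega> \<in> space (RHA_P k). rha_Xseg k \<omega> i (i + length x - 1) = x} * \<phi> x)
         = integral\<^sup>L (RHA_P k) (\<lambda>w. \<phi> (rha_Xseg k w i (i + 2^n - 1)))"
proof -
  let ?X = "{x. length x = 2^n \<and> set x \<subseteq> {1..k 0}}"
  define M where "M = n + i + 1"
  have M: "n + i div 2^n + 1 \<le> M" unfolding M_def by (simp add: div_le_dividend)
  have i1: "1 \<le> i" using i by (meson le_trans one_le_numeral one_le_power)
  have finX: "finite ?X"
    using finite_lists_length_eq[of "{1..k 0}" "2^n"] by (simp add: conj_commute)
  let ?W = "\<lambda>w. rha_Xseg k w i (i + 2^n - 1)"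
  have "(\<Sum>x\<in>?X. measure (RHA_P k) {\<omega> \<in> space (RHA_P k). rha_Xseg k \<omega> i (i + length x - 1) = x} * \<phi> x)
      = (\<Sum>x\<in>?X. EQ k M (\<lambda>w. (\<lambda>z. if z = x then 1 else 0) (?W w)) * \<phi> x)"
  proof (rule sum.cong[OF refl])
    fix x assume "x \<in> ?X"
    then have x: "length x = 2^n" by simp
    have "measure (RHA_P k) {\<omega> \<in> space (RHA_P k). rha_Xseg k \<omega> i (i + length x - 1) = x}
        = integral\<^sup>L (RHA_P k) (\<lambda>w. (\<lambda>z. if z = x then 1 else 0) (?W w))"
    proof -
      have "measure (RHA_P k) {\<omega> \<in> space (RHA_P k). rha_Xseg k \<omega> i (i + length x - 1) = x} =
          integral\<^sup>L (RHA_P k) (indicator {\<omega> \<in> space (RHA_P k). rha_Xseg k \<omega> i (i + length x - 1) = x})"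
        by (simp add: Int_absorb2)
      also have "indicator {\<omega> \<in> space (RHA_P k). rha_Xseg k \<omega> i (i + length x - 1) = x} = (\<lambda>w. (\<lambda>z. if z = x then 1 else 0::real) (?W w))"
        by (rule ext) (simp add: x space_RHA indicator_def)
      finally show ?thesis .
    qed
    also have "\<dots> = EQ k M (\<lambda>w. (\<lambda>z. if z = x then 1 else 0) (?W w))"
      by (rule Xseg_int[OF i M])
    finally show "measure (RHA_P k) {\<omega> \<in> space (RHA_P k). rha_Xseg k \<omega> i (i + length x - 1) = x} * \<phi> x
        = EQ k M (\<lambda>w. (\<lambda>z. if z = x then 1 else 0) (?W w)) * \<phi> x" by simp
  qed
  also have "\<dots> = EQ k M (\<lambda>w. \<Sum>x\<in>?X. (if ?W w = x then 1 else 0) * \<phi> x)"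
    by (simp add: exp_sum[OF Q_fin[OF kok]])
  also have "\<dots> = EQ k M (\<lambda>w. \<phi> (?W w))"
  proof (rule EQ_cong[OF kok])
    fix w assume v: "vld k w M"
    have "?W w \<in> ?X"
      using len_window[OF i1] window_valid[OF kok v i M] by simp
    have "(\<Sum>x\<in>?X. (if ?W w = x then 1 else 0) * \<phi> x) = (\<Sum>x\<in>?X. if x = ?W w then \<phi> x else 0)"
      by (intro sum.cong refl) auto
    also have "\<dots> = \<phi> (?W w)" using finX \<open>?W w \<in> ?X\<close> by (simp add: sum.delta')
    finally show "(\<Sum>x\<in>?X. (if ?W w = x then 1 else 0) * \<phi> x) = \<phi> (?W w)" .
  qed
  also have "\<dots> = integral\<^sup>L (RHA_P k) (\<lambda>w. \<phi> (?W w))"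
    by (rule Xseg_int[OF i M, symmetric])
  finally show ?thesis .
qed



theorem proposition3:
  fixes k :: "nat \<Rightarrow> nat" and \<phi> :: "nat list \<Rightarrow> real" and n j :: nat
  assumes "\<forall>i. 0 < k i"
    and "\<forall>i\<ge>1. k (i - 1) \<le> k i \<and> k i \<le> (k (i - 1))\<^sup>2"
    and "\<forall>u w. set w \<subseteq> {1..k 0} \<longrightarrow> sublist u w \<longrightarrow> \<phi> u \<le> \<phi> w"
    and "n \<ge> 1" and "j \<ge> 1"
  shows "(\<integral>\<omega>. \<phi> (rha_Xblock k \<omega> (n - 1) j) \<partial>RHA_P k) \<le> rha_mu_expect k (2 ^ n) \<phi>
       \<and> rha_mu_expect k (2 ^ n) \<phi> \<le> (\<integral>\<omega>. \<phi> (rha_Xblock k \<omega> (n + 1) j) \<partial>RHA_P k)"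
proof -
  have kok: "kok k" unfolding kok_def using assms(1) assms(2) by (rule conjI)
  note mono = assms(3)
  define m where "m = (2::nat)^n"
  have m1: "1 \<le> m" unfolding m_def by simp
  let ?X = "{x. length x = 2^n \<and> set x \<subseteq> {1..k 0}}"
  define f where "f x i = measure (RHA_P k) {\<omega> \<in> space (RHA_P k). rha_Xseg k \<omega> i (i + length x - 1) = x}" for x i
  define e where "e i = integral\<^sup>L (RHA_P k) (\<lambda>w. \<phi> (rha_Xseg k w i (i + 2^n - 1)))" for i
  define L where "L = (\<integral>\<omega>. \<phi> (rha_Xblock k \<omega> (n - 1) j) \<partial>RHA_P k)"
  define U where "U = (\<integral>\<omega>. \<phi> (rha_Xblock k \<omega> (n + 1) j) \<partial>RHA_P k)"
  have mu: "rha_mu k x = (\<Sum>i\<in>{m..<2*m}. f x i) / real m" if x: "x \<in> ?X" for x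
  proof -
    have lx: "length x = 2^n" using x by simp
    have per: "f x (i + m) = f x i" if i: "m \<le> i" for i
    proof -
      have i': "2^n \<le> i" "2^n \<le> i + m" using i unfolding m_def by auto
      have "(i + m) mod 2^n = i mod 2^n" unfolding m_def by simp
      then show ?thesis unfolding f_def prob_law[OF kok i'(1) lx] prob_law[OF kok i'(2) lx] by simp
    qed
    have "(\<lambda>N. (\<Sum>i=1..N. f x i) / real N) \<longlonglongrightarrow> (\<Sum>i\<in>{m..<2*m}. f x i) / real m"
      by (rule cesaro_periodic[where f="f x", OF m1 per])
    then show ?thesis unfolding rha_mu_def f_def by (rule limI)
  qed
  have "rha_mu_expect k (2^n) \<phi> = (\<Sum>x\<in>?X. (\<Sum>i\<in>{m..<2*m}. f x i) / real m * \<phi> x)"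
    unfolding rha_mu_expect_def by (intro sum.cong refl) (simp add: mu)
  also have "\<dots> = (\<Sum>i\<in>{m..<2*m}. \<Sum>x\<in>?X. f x i * \<phi> x) / real m"
  proof -
    have "(\<Sum>x\<in>?X. (\<Sum>i\<in>{m..<2*m}. f x i) / real m * \<phi> x) = (\<Sum>x\<in>?X. (\<Sum>i\<in>{m..<2*m}. f x i * \<phi> x)) / real m"
      by (simp add: sum_divide_distrib sum_distrib_right)
    also have "(\<Sum>x\<in>?X. (\<Sum>i\<in>{m..<2*m}. f x i * \<phi> x)) = (\<Sum>i\<in>{m..<2*m}. \<Sum>x\<in>?X. f x i * \<phi> x)"
      by (rule sum.swap)
    finally show ?thesis .
  qed
  also have "\<dots> = (\<Sum>i\<in>{m..<2*m}. e i) / real m"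
  proof -
    have "(\<Sum>x\<in>?X. f x i * \<phi> x) = e i" if "i \<in> {m..<2*m}" for i
      unfolding f_def e_def using sum_law[OF kok, of n i \<phi>] that unfolding m_def by simp
    then show ?thesis by simp
  qed
  finally have R: "rha_mu_expect k (2^n) \<phi> = (\<Sum>i\<in>{m..<2*m}. e i) / real m" .
  have bnd: "L \<le> e i \<and> e i \<le> U" if "i \<in> {m..<2*m}" for i
  proof -
    have i: "2^n \<le> i" using that unfolding m_def by simp
    show ?thesis unfolding L_def U_def e_def
      using lower[OF kok mono i assms(4) assms(5)] upper[OF kok mono i assms(5)] by simp
  qed
  have c: "card {m..<2*m} = m" by simp
  have "real m * L \<le> (\<Sum>i\<in>{m..<2*m}. e i)"
    using sum_bounded_below[of "{m..<2*m}" L e] bnd c by simp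
  moreover have "(\<Sum>i\<in>{m..<2*m}. e i) \<le> real m * U"
    using sum_bounded_above[of "{m..<2*m}" e U] bnd c by simp
  moreover have "real m > 0" using m1 by simp
  ultimately have "L \<le> (\<Sum>i\<in>{m..<2*m}. e i) / real m" "(\<Sum>i\<in>{m..<2*m}. e i) / real m \<le> U"
    by (simp_all add: field_simps)
  then show ?thesis unfolding R[symmetric] L_def U_def by simp
qed


end
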